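(* Any sequence $g_1,g_2,\dots\in\mathrm{PGL}_n(\mathbb C)$ contains a subsequence that converges to some point of $\mathrm{Hinge}^*_n$, in the following sense: there is a hinge $(P_1,\dots,P_k)$ and, for each $\sigma=1,\dots,k$, a sequence $\beta^{(\sigma)}_j\in\mathbb C^*$, such that (for representatives of the $g_j$ in $\mathrm{GL}_n(\mathbb C)$ along the subsequence) $\mathrm{graph}(\beta^{(\sigma)}_jg_j)$ converges to $P_\sigma$ in the Grassmannian $\mathrm{Gr}_n$ of $n$-dimensional subspaces of $\mathbb C^n\oplus\mathbb C^n$, for every $\sigma$.
   Context: Let $V=\mathbb C^n$. For a linear subspace (linear relation) $P\subset V\oplus V$: $\mathrm{Ker}\,P=\{v: v\oplus0\in P\}$, $\mathrm{Dom}\,P$ and $\mathrm{Im}\,P$ are the projections of $P$ to the first and second summands, $\mathrm{Indef}\,P=\{w:0\oplus w\in P\}$, $\mathrm{rk}\,P=\dim\mathrm{Dom}\,P-\dim\mathrm{Ker}\,P$. A hinge is a sequence $(P_1,\dots,P_k)$ of $n$-dimensional subspaces of $V\oplus V$ such that $\mathrm{Ker}\,P_j=\mathrm{Dom}\,P_{j+1}$ and $\mathrm{Im}\,P_j=\mathrm{Indef}\,P_{j+1}$ for $1\le j\le k-1$, $\mathrm{Dom}\,P_1=V$, $\mathrm{Im}\,P_k=V$, and $\mathrm{rk}\,P_j>0$ for all $j$. $\mathrm{Hinge}^*_n$ is the set of hinges modulo $(P_1,\dots,P_k)\sim(c_1P_1,\dots,c_kP_k)$, $c_j\in\mathbb C^*$,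 where $c\cdot P=\{v\oplus cw:v\oplus w\in P\}$. The graph of an operator $A$ is $\{v\oplus Av\}$. *)

theory Defs
  imports "HOL-Analysis.Analysis"
begin

text \<open>V = complex^'n (n = CARD('n)); V \<oplus> V is represented as pairs.\<close>

definition vscale :: "complex \<Rightarrow> complex ^ 'n \<Rightarrow> complex ^ 'n" where
  "vscale c v = c *s v"

definition pscale :: "complex \<Rightarrow> (complex ^ 'n) \<times> (complex ^ 'n) \<Rightarrow> (complex ^ 'n) \<times> (complex ^ 'n)" where
  "pscale c p = (c *s fst p, c *s snd p)"

definition csub2 :: "((complex ^ 'n) \<times> (complex ^ 'n)) set \<Rightarrow> bool" where
  "csub2 P = module.subspace pscale P"

definition cdim2 :: "((complex ^ 'n) \<times> (complex ^ 'n)) set \<Rightarrow> nat" where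
  "cdim2 P = vector_space.dim pscale P"

definition cdimV :: "(complex ^ 'n) set \<Rightarrow> nat" where
  "cdimV S = vector_space.dim vscale S"

definition Ker :: "((complex ^ 'n) \<times> (complex ^ 'n)) set \<Rightarrow> (complex ^ 'n) set" where
  "Ker P = {v. (v, 0) \<in> P}"

definition Dom :: "((complex ^ 'n) \<times> (complex ^ 'n)) set \<Rightarrow> (complex ^ 'n) set" where
  "Dom P = fst ` P"

definition Im :: "((complex ^ 'n) \<times> (complex ^ 'n)) set \<Rightarrow> (complex ^ 'n) set" where
  "Im P = snd ` P"

definition Indef :: "((complex ^ 'n) \<times> (complex ^ 'n)) set \<Rightarrow> (complex ^ 'n) set" where
  "Indef P = {w. (0, w) \<in> P}"

text \<open>rk P = dim Dom P - dim Ker P (Ker P \<subseteq> Dom P, so no truncation occurs)\<close>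
definition rk :: "((complex ^ 'n) \<times> (complex ^ 'n)) set \<Rightarrow> nat" where
  "rk P = cdimV (Dom P) - cdimV (Ker P)"

text \<open>A hinge (P_1,...,P_k), k \<ge> 1, as a list (0-based indices).\<close>
definition is_hinge :: "((complex ^ 'n) \<times> (complex ^ 'n)) set list \<Rightarrow> bool" where
  "is_hinge Ps \<longleftrightarrow> Ps \<noteq> [] \<and>
     (\<forall>P\<in>set Ps. csub2 P \<and> cdim2 P = CARD('n)) \<and>
     (\<forall>j. j + 1 < length Ps \<longrightarrow>
          Ker (Ps ! j) = Dom (Ps ! (j + 1)) \<and> Im (Ps ! j) = Indef (Ps ! (j + 1))) \<and>
     Dom (hd Ps) = UNIV \<and> Im (last Ps) = UNIV \<and>
     (\<forall>P\<in>set Ps. rk P > 0)"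

definition graph :: "complex ^ 'n ^ 'n \<Rightarrow> ((complex ^ 'n) \<times> (complex ^ 'n)) set" where
  "graph A = {(v, A *v v) | v. True}"

text \<open>Convergence in the Grassmannian Gr_n: the orthogonal projections onto the
  subspaces converge (standard embedding of Gr_n into the space of projections).
  The real inner product on V\<oplus>V is the real part of the Hermitian one, so for
  complex subspaces the nearest-point map is the Hermitian orthogonal projection.\<close>
definition gr_tendsto ::
  "(nat \<Rightarrow> ((complex ^ 'n) \<times> (complex ^ 'n)) set) \<Rightarrow> ((complex ^ 'n) \<times> (complex ^ 'n)) set \<Rightarrow> bool" where
  "gr_tendsto Q P \<longleftrightarrow> (\<forall>x. (\<lambda>j. closest_point (Q j) x) \<longlonglongrightarrow> closest_point P x)"

end

theory Submission
  imports Defs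
begin


lemma cp_char:
  fixes S :: "'a::euclidean_space set"
  assumes S: "subspace S"
  shows "closest_point S x \<in> S \<and> (\<forall>s\<in>S. inner (x - closest_point S x) s = 0)"
proof -
  have cl: "closed S" using S by (simp add: closed_subspace)
  have cv: "convex S" using S by (simp add: subspace_imp_convex)
  have ne: "S \<noteq> {}" using S subspace_0 by auto
  let ?p = "closest_point S x"
  have pS: "?p \<in> S" using closest_point_in_set[OF cl ne] .
  have "inner (x - ?p) s = 0" if "s \<in> S" for s
  proof -
    have "?p + s \<in> S" "?p - s \<in> S" using S pS that by (auto simp: subspace_add subspace_diff)
    then have "inner (x - ?p) ((?p + s) - ?p) \<le> 0" "inner (x - ?p) ((?p - s) - ?p) \<le> 0"
      using closest_point_dot[OF cv cl] by blast+
    then show ?thesis by (simp add: inner_diff_right)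
  qed
  then show ?thesis using pS by blast
qed

lemma cp_unique:
  fixes S :: "'a::euclidean_space set"
  assumes S: "subspace S" and pS: "p \<in> S" and orth: "\<forall>s\<in>S. inner (x - p) s = 0"
  shows "closest_point S x = p"
proof -
  have cl: "closed S" using S by (simp add: closed_subspace)
  have cv: "convex S" using S by (simp add: subspace_imp_convex)
  have "dist x p \<le> dist x z" if "z \<in> S" for z
  proof -
    have "p - z \<in> S" using S pS that by (simp add: subspace_diff)
    then have o: "inner (x - p) (p - z) = 0" using orth by blast
    have e: "x - z = (x - p) + (p - z)" by simp
    have "(norm (x - z))^2 = (norm (x - p))^2 + (norm (p - z))^2"
      unfolding e by (rule norm_add_Pythagorean) (simp add: orthogonal_def o)
    then have "(norm (x - p))^2 \<le> (norm (x - z))^2" by simp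
    then have "norm (x - p) \<le> norm (x - z)" by (rule power2_le_imp_le) simp
    then show ?thesis by (simp add: dist_norm)
  qed
  then show ?thesis using closest_point_unique[OF cv cl pS] by metis
qed

lemma cp_linear:
  fixes S :: "'a::euclidean_space set"
  assumes S: "subspace S"
  shows "linear (closest_point S)"
proof
  fix x y
  have hx: "closest_point S x \<in> S" "\<forall>s\<in>S. inner (x - closest_point S x) s = 0"
    using cp_char[OF S, of x] by auto
  have hy: "closest_point S y \<in> S" "\<forall>s\<in>S. inner (y - closest_point S y) s = 0"
    using cp_char[OF S, of y] by auto
  have "inner ((x + y) - (closest_point S x + closest_point S y)) s = 0" if "s \<in> S" for s
  proof -
    have "(x + y) - (closest_point S x + closest_point S y) = (x - closest_point S x) + (y - closest_point S y)"
      by simp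
    then show ?thesis using hx hy that by (simp only: inner_add_left)
  qed
  moreover have "closest_point S x + closest_point S y \<in> S" using hx hy S subspace_add by blast
  ultimately show "closest_point S (x + y) = closest_point S x + closest_point S y"
    using cp_unique[OF S] by blast
next
  fix c x
  have h: "closest_point S x \<in> S" "\<forall>s\<in>S. inner (x - closest_point S x) s = 0"
    using cp_char[OF S, of x] by auto
  have "inner (c *\<^sub>R x - c *\<^sub>R closest_point S x) s = 0" if "s \<in> S" for s
  proof -
    have "c *\<^sub>R x - c *\<^sub>R closest_point S x = c *\<^sub>R (x - closest_point S x)"
      by (simp add: scaleR_diff_right)
    then show ?thesis using h that by simp
  qed
  then show "closest_point S (c *\<^sub>R x) = c *\<^sub>R closest_point S x"
    using cp_unique[OF S] h S subspace_scale by blast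
qed



lemma cp_approx:
  fixes S' :: "nat \<Rightarrow> 'a::euclidean_space set"
  assumes q: "\<And>j. q j \<in> S' j" and Ssub: "\<And>j. subspace (S' j)" and lim: "q \<longlonglongrightarrow> p"
  shows "(\<lambda>j. closest_point (S' j) p) \<longlonglongrightarrow> p"
proof -
  have cl: "closed (S' j)" for j using Ssub[of j] by (simp add: closed_subspace)
  have le: "norm (closest_point (S' j) p - p) \<le> norm (q j - p)" for j
    using closest_point_le[OF cl[of j] q[of j], of p] by (simp add: dist_norm norm_minus_commute)
  have "(\<lambda>j. q j - p) \<longlonglongrightarrow> 0" using lim by (simp add: LIM_zero)
  then have "(\<lambda>j. norm (q j - p)) \<longlonglongrightarrow> 0" by (simp add: tendsto_norm_zero)
  then have "(\<lambda>j. closest_point (S' j) p - p) \<longlonglongrightarrow> 0"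
    by (rule Lim_null_comparison[rotated]) (simp add: le)
  then show ?thesis by (simp add: LIM_zero_iff)
qed

lemma gr_lemma:
  fixes Q :: "nat \<Rightarrow> 'a::euclidean_space set" and P :: "'a set"
  assumes P: "subspace P" and Q: "\<And>j. subspace (Q j)" and D: "\<And>j. dim (Q j) = dim P"
    and approx: "\<And>p. p \<in> P \<Longrightarrow> \<exists>q. (\<forall>j. q j \<in> Q j) \<and> q \<longlonglongrightarrow> p"
  shows "(\<lambda>j. closest_point (Q j) x) \<longlonglongrightarrow> closest_point P x"
proof -
  define \<pi> where "\<pi> j = closest_point (Q j)" for j
  have lin: "linear (\<pi> j)" for j unfolding \<pi>_def by (rule cp_linear[OF Q])
  have conv: "(\<lambda>j. \<pi> j p) \<longlonglongrightarrow> p" if pP0: "p \<in> P" for p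
  proof -
    obtain q where "\<forall>j. q j \<in> Q j" "q \<longlonglongrightarrow> p" using approx[OF pP0] by blast
    then show ?thesis unfolding \<pi>_def using cp_approx[of q Q p] Q by blast
  qed
  obtain B where B: "B \<subseteq> P" "pairwise orthogonal B" "\<And>x. x \<in> B \<Longrightarrow> norm x = 1"
      "independent B" "card B = dim P" "span B = P"
    using orthonormal_basis_subspace[OF P] by metis
  have finB: "finite B" using B(4) by (simp add: independent_imp_finite)
  define \<delta> where "\<delta> j = (\<Sum>b\<in>B. norm (\<pi> j b - b))" for j
  have \<delta>0: "\<delta> \<longlonglongrightarrow> 0"
  proof -
    have "(\<lambda>j. norm (\<pi> j b - b)) \<longlonglongrightarrow> 0" if "b \<in> B" for b
    proof -
      have "(\<lambda>j. \<pi> j b - b) \<longlonglongrightarrow> 0" using conv[of b] that B(1) by (auto simp: LIM_zero)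
      then show ?thesis by (simp add: tendsto_norm_zero)
    qed
    then have "(\<lambda>j. \<Sum>b\<in>B. norm (\<pi> j b - b)) \<longlonglongrightarrow> (\<Sum>b\<in>B. 0)"
      by (intro tendsto_sum) auto
    then show ?thesis by (simp add: \<delta>_def[abs_def])
  qed
  have \<delta>ge: "\<delta> j \<ge> 0" for j unfolding \<delta>_def by (simp add: sum_nonneg)
  have bound: "norm (\<pi> j p - p) \<le> \<delta> j * norm p" if pP: "p \<in> P" for j p
  proof -
    have "p \<in> span B" using B(6) pP by simp
    then obtain u where u: "p = (\<Sum>b\<in>B. u b *\<^sub>R b)" using span_finite[OF finB] by auto
    have coef: "inner p b = u b" if bB: "b \<in> B" for b
    proof -
      have "inner p b = (\<Sum>c\<in>B. u c * inner c b)" unfolding u by (simp add: inner_sum_left)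
      also have "\<dots> = (\<Sum>c\<in>B. if c = b then u c else 0)"
      proof (rule sum.cong[OF refl])
        fix c assume cB: "c \<in> B"
        show "u c * inner c b = (if c = b then u c else 0)"
        proof (cases "c = b")
          case True
          then have "inner c b = 1" using B(3)[OF bB] by (simp add: norm_eq_1)
          then show ?thesis using True by simp
        next
          case False
          then have "inner c b = 0" using B(2) cB bB by (auto simp: pairwise_def orthogonal_def)
          then show ?thesis using False by simp
        qed
      qed
      also have "\<dots> = u b" using bB finB by simp
      finally show ?thesis .
    qed
    have "\<pi> j p - p = (\<Sum>b\<in>B. u b *\<^sub>R (\<pi> j b - b))"
      unfolding u using lin[of j]
      by (simp add: linear_sum linear_scale scaleR_diff_right sum_subtractf)
    also have "norm \<dots> \<le> (\<Sum>b\<in>B. norm (u b *\<^sub>R (\<pi> j b - b)))" by (rule norm_sum)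
    also have "\<dots> \<le> (\<Sum>b\<in>B. norm p * norm (\<pi> j b - b))"
    proof (rule sum_mono)
      fix b assume bB: "b \<in> B"
      have "\<bar>u b\<bar> \<le> norm p"
        using Cauchy_Schwarz_ineq2[of p b] coef[OF bB] B(3)[OF bB] by simp
      then show "norm (u b *\<^sub>R (\<pi> j b - b)) \<le> norm p * norm (\<pi> j b - b)"
        by (simp add: mult_right_mono)
    qed
    also have "\<dots> = \<delta> j * norm p" by (simp add: \<delta>_def sum_distrib_left mult.commute)
    finally show ?thesis .
  qed
  define y where "y = x - closest_point P x"
  have cpP: "closest_point P x \<in> P" "\<forall>s\<in>P. inner y s = 0" using cp_char[OF P, of x] by (auto simp: y_def)
  have ev: "eventually (\<lambda>j. \<delta> j < 1/2) sequentially"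
    using \<delta>0 by (rule order_tendstoD) simp
  have ybound: "norm (\<pi> j y) \<le> 2 * \<delta> j * norm y" if dj: "\<delta> j < 1/2" for j
  proof -
    have inj: "inj_on (\<pi> j) (span P)"
    proof (rule linear_inj_on_iff_eq_0[OF lin subspace_span, THEN iffD2], intro ballI impI)
      fix p assume "p \<in> span P" and z: "\<pi> j p = 0"
      then have pP: "p \<in> P" using P by (metis span_eq_iff)
      have "norm p \<le> \<delta> j * norm p" using bound[OF pP, of j] z by simp
      then have "(1 - \<delta> j) * norm p \<le> 0" by (simp add: algebra_simps)
      moreover have "1 - \<delta> j > 0" using dj by simp
      ultimately have "norm p \<le> 0" by (simp add: mult_le_0_iff)
      then show "p = 0" by simp
    qed
    have dimeq: "dim (\<pi> j ` P) = dim P" by (rule dim_image_eq[OF lin inj])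
    have sub: "\<pi> j ` P \<subseteq> Q j" using cp_char[OF Q] unfolding \<pi>_def by blast
    have eqQ: "\<pi> j ` P = Q j"
      by (rule subspace_dim_equal[OF linear_subspace_image[OF lin P] Q sub]) (simp add: dimeq D)
    have cy: "\<pi> j y \<in> Q j" "\<forall>s\<in>Q j. inner (y - \<pi> j y) s = 0" using cp_char[OF Q, of j y] by (auto simp: \<pi>_def)
    obtain p where pP: "p \<in> P" and pe: "\<pi> j y = \<pi> j p" using cy(1) eqQ by (metis imageE)
    have n2: "(norm (\<pi> j y))^2 = inner (\<pi> j y) y"
    proof -
      have "inner (y - \<pi> j y) (\<pi> j y) = 0" using cy by blast
      then show ?thesis by (simp add: inner_diff_left inner_diff_right power2_norm_eq_inner inner_commute)
    qed
    have le1: "norm (\<pi> j y) \<le> norm y"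
    proof -
      have "(norm (\<pi> j y))^2 \<le> norm (\<pi> j y) * norm y" using n2 norm_cauchy_schwarz[of "\<pi> j y" y] by simp
      then show ?thesis by (cases "norm (\<pi> j y) = 0") (auto simp: power2_eq_square mult_le_cancel_left)
    qed
    have "inner (\<pi> j y) y = inner (\<pi> j p - p) y"
      using cpP(2) pP pe by (simp add: inner_diff_left inner_diff_right inner_commute)
    also have "\<dots> \<le> norm (\<pi> j p - p) * norm y" by (rule norm_cauchy_schwarz)
    also have "\<dots> \<le> \<delta> j * norm p * norm y" using bound[OF pP, of j] by (simp add: mult_right_mono)
    finally have A: "(norm (\<pi> j y))^2 \<le> \<delta> j * norm p * norm y" using n2 by simp
    have "norm p \<le> norm (\<pi> j p) + norm (\<pi> j p - p)" using norm_triangle_ineq4[of "\<pi> j p" "\<pi> j p - p"] by simp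
    then have "norm p \<le> norm (\<pi> j p) + \<delta> j * norm p" using bound[OF pP, of j] by simp
    moreover have "\<delta> j * norm p \<le> (1/2) * norm p" by (rule mult_right_mono) (use dj in auto)
    ultimately have "norm p \<le> 2 * norm (\<pi> j y)" unfolding pe by linarith
    then have "(norm (\<pi> j y))^2 \<le> \<delta> j * (2 * norm (\<pi> j y)) * norm y"
      proof -
      have "\<delta> j * norm p * norm y \<le> \<delta> j * (2 * norm (\<pi> j y)) * norm y"
        by (intro mult_right_mono mult_left_mono) (use \<open>norm p \<le> 2 * norm (\<pi> j y)\<close> \<delta>ge[of j] in auto)
      then show ?thesis using A by linarith
    qed
    then have "norm (\<pi> j y) * norm (\<pi> j y) \<le> norm (\<pi> j y) * (2 * \<delta> j * norm y)"
      by (simp add: power2_eq_square algebra_simps)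
    then show ?thesis
      using \<delta>ge[of j] by (cases "norm (\<pi> j y) = 0") (auto simp: mult_le_cancel_left)
  qed
  have "(\<lambda>j. \<pi> j y) \<longlonglongrightarrow> 0"
  proof (rule Lim_null_comparison)
    show "eventually (\<lambda>j. norm (\<pi> j y) \<le> 2 * \<delta> j * norm y) sequentially"
      using ev by eventually_elim (rule ybound)
    show "(\<lambda>j. 2 * \<delta> j * norm y) \<longlonglongrightarrow> 0" by (intro tendsto_mult_right_zero tendsto_mult_left_zero \<delta>0)
  qed
  moreover have "(\<lambda>j. \<pi> j (closest_point P x)) \<longlonglongrightarrow> closest_point P x" using conv cpP(1) by blast
  ultimately have "(\<lambda>j. \<pi> j (closest_point P x) + \<pi> j y) \<longlonglongrightarrow> closest_point P x + 0"
    by (intro tendsto_add)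
  moreover have "\<pi> j (closest_point P x) + \<pi> j y = \<pi> j x" for j
    using lin[of j] unfolding y_def by (simp add: linear_diff)
  ultimately show ?thesis by (simp add: \<pi>_def)
qed



definition herm :: "complex ^ 'n \<Rightarrow> complex ^ 'n \<Rightarrow> complex" where
  "herm x y = (\<Sum>i\<in>UNIV. x $ i * cnj (y $ i))"

lemma herm_add_left: "herm (x + y) z = herm x z + herm y z"
  by (simp add: herm_def distrib_right sum.distrib)

lemma herm_add_right: "herm x (y + z) = herm x y + herm x z"
  by (simp add: herm_def distrib_left sum.distrib)

lemma herm_diff_left: "herm (x - y) z = herm x z - herm y z"
  by (simp add: herm_def left_diff_distrib sum_subtractf)

lemma herm_diff_right: "herm x (y - z) = herm x y - herm x z"
  by (simp add: herm_def right_diff_distrib sum_subtractf)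

lemma herm_scale_left: "herm (c *s x) y = c * herm x y"
  by (simp add: herm_def sum_distrib_left mult.assoc)

lemma herm_scale_right: "herm x (c *s y) = cnj c * herm x y"
  by (simp add: herm_def sum_distrib_left algebra_simps)

lemma herm_sym: "herm y x = cnj (herm x y)"
  by (simp add: herm_def mult.commute)

lemma herm_zero_left[simp]: "herm 0 y = 0" by (simp add: herm_def)
lemma herm_zero_right[simp]: "herm x 0 = 0" by (simp add: herm_def)

lemma herm_sum_left: "herm (\<Sum>k\<in>K. f k) y = (\<Sum>k\<in>K. herm (f k) y)"
  by (induction K rule: infinite_finite_induct) (auto simp: herm_add_left)

lemma Re_herm: "Re (herm x y) = inner x y"
  by (simp add: herm_def inner_vec_def inner_complex_def Re_sum)

lemma herm_self: "herm x x = complex_of_real ((norm x)^2)"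
proof -
  have "herm x x = (\<Sum>i\<in>UNIV. complex_of_real ((cmod (x $ i))^2))"
    unfolding herm_def complex_norm_square by (rule refl)
  also have "\<dots> = complex_of_real (\<Sum>i\<in>UNIV. (cmod (x $ i))^2)" by simp
  also have "(\<Sum>i\<in>UNIV. (cmod (x $ i))^2) = (norm x)^2"
    by (simp add: norm_vec_def L2_set_def sum_nonneg)
  finally show ?thesis .
qed

lemma herm_self_eq0: "herm x x = 0 \<longleftrightarrow> x = 0"
  by (simp add: herm_self)

lemma herm_ii: "herm x (\<i> *s y) = - \<i> * herm x y"
  by (simp add: herm_scale_right)

lemma herm_zero_iff_inner: "herm x y = 0 \<longleftrightarrow> inner x y = 0 \<and> inner x (\<i> *s y) = 0"
proof -
  have "inner x (\<i> *s y) = complex.Im (herm x y)"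
    using Re_herm[of x "\<i> *s y"] by (simp add: herm_ii)
  then show ?thesis using Re_herm[of x y] by (simp add: complex_eq_iff)
qed

lemma continuous_on_herm_left: "continuous_on UNIV (\<lambda>v. herm v c)"
  unfolding herm_def by (intro continuous_intros)

lemma tendsto_herm:
  assumes "(f \<longlongrightarrow> a) F" "(g \<longlongrightarrow> b) F"
  shows "((\<lambda>x. herm (f x) (g x)) \<longlongrightarrow> herm a b) F"
  unfolding herm_def using assms by (intro tendsto_intros)

lemma herm_expand:
  "herm (x + t *s y) (x + t *s y) = herm x x + t * herm y x + cnj t * herm x y + (t * cnj t) * herm y y"
  by (simp add: herm_add_left herm_add_right herm_scale_left herm_scale_right algebra_simps)



lemma norm_cscale: "norm (c *s (x::complex^'n)) = cmod c * norm x"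
proof -
  have "norm (c *s x) = L2_set (\<lambda>i. cmod c * norm (x $ i)) UNIV"
    by (simp add: norm_vec_def norm_mult)
  also have "\<dots> = cmod c * norm x" by (simp add: norm_vec_def L2_set_right_distrib)
  finally show ?thesis .
qed

definition Cperp :: "(complex ^ 'n) set \<Rightarrow> (complex ^ 'n) set" where
  "Cperp B = {v. \<forall>c\<in>B. herm v c = 0}"

lemma Cperp_add: "x \<in> Cperp B \<Longrightarrow> y \<in> Cperp B \<Longrightarrow> x + y \<in> Cperp B"
  by (simp add: Cperp_def herm_add_left)

lemma Cperp_scale: "x \<in> Cperp B \<Longrightarrow> c *s x \<in> Cperp B"
  by (simp add: Cperp_def herm_scale_left)

lemma closed_Cperp: "closed (Cperp B)"
proof -
  have "Cperp B = (\<Inter>c\<in>B. {v. herm v c = 0})" by (auto simp: Cperp_def)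
  moreover have "closed {v. herm v c = 0}" for c
    by (rule closed_Collect_eq[OF continuous_on_herm_left continuous_on_const])
  ultimately show ?thesis by (metis closed_INT)
qed

lemma perp_exists:
  fixes B :: "(complex ^ 'n) set"
  assumes fin: "finite B" and lt: "card B < CARD('n)"
  shows "\<exists>v. v \<in> Cperp B \<and> norm v = 1"
proof -
  let ?T = "B \<union> (\<lambda>b. \<i> *s b) ` B"
  have "card ?T \<le> card B + card B"
    using card_Un_le[of B "(\<lambda>b. \<i> *s b) ` B"] card_image_le[OF fin, of "\<lambda>b. \<i> *s b"] by linarith
  then have dimT: "dim ?T < DIM(complex ^ 'n)"
    using dim_le_card'[of ?T] fin lt by (simp add: DIM_cart)
  then obtain x :: "complex ^ 'n" where x0: "x \<noteq> 0" and xo: "\<And>y. y \<in> span ?T \<Longrightarrow> orthogonal x y"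
    using orthogonal_to_subspace_exists[OF dimT] by metis
  have xB: "x \<in> Cperp B"
  proof -
    have "herm x c = 0" if "c \<in> B" for c
    proof -
      have "orthogonal x c" "orthogonal x (\<i> *s c)" using xo that by (auto intro: span_base)
      then show ?thesis by (simp add: herm_zero_iff_inner orthogonal_def)
    qed
    then show ?thesis by (simp add: Cperp_def)
  qed
  define v where "v = complex_of_real (1 / norm x) *s x"
  have "v \<in> Cperp B" unfolding v_def by (rule Cperp_scale[OF xB])
  moreover have "norm v = 1" using x0 by (simp add: v_def norm_cscale norm_divide)
  ultimately show ?thesis by blast
qed

lemma var_lemma:
  fixes g :: "complex ^ 'n ^ 'n"
  assumes v0: "v0 \<in> Cperp B" "norm v0 = 1"
    and mx: "\<forall>y\<in>Cperp B. norm y = 1 \<longrightarrow> norm (g *v y) \<le> norm (g *v v0)"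
    and u: "u \<in> Cperp B" "herm u v0 = 0"
  shows "herm (g *v v0) (g *v u) = 0"
proof (rule ccontr)
  define M where "M = norm (g *v v0)"
  define a where "a = herm (g *v v0) (g *v u)"
  assume "a \<noteq> 0"
  then have aA: "a \<noteq> 0" by (simp add: a_def)
  have bnd: "norm (g *v v) \<le> M * norm v" if vC: "v \<in> Cperp B" for v
  proof (cases "v = 0")
    case True then show ?thesis by simp
  next
    case False
    define y where "y = complex_of_real (1 / norm v) *s v"
    have "y \<in> Cperp B" unfolding y_def by (rule Cperp_scale[OF vC])
    moreover have "norm y = 1" using False by (simp add: y_def norm_cscale norm_divide)
    ultimately have "norm (g *v y) \<le> M" using mx by (simp add: M_def)
    moreover have "norm (g *v y) = norm (g *v v) / norm v"
      by (simp add: y_def vector_scalar_commute norm_cscale norm_divide)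
    ultimately show ?thesis using False by (simp add: field_simps)
  qed
  define A2 where "A2 = (cmod a)^2"
  have A2pos: "A2 > 0" using aA by (simp add: A2_def)
  define nu where "nu = norm u"
  define N1 where "N1 = norm (g *v u)"
  define X where "X = M^2 * nu^2"
  have X0: "X \<ge> 0" by (simp add: X_def)
  define \<epsilon> where "\<epsilon> = 1 / (X + 1)"
  have \<epsilon>pos: "\<epsilon> > 0" using X0 by (simp add: \<epsilon>_def)
  define t where "t = complex_of_real \<epsilon> * a"
  define v where "v = v0 + t *s u"
  have vC: "v \<in> Cperp B" unfolding v_def by (intro Cperp_add Cperp_scale v0 u)
  have acnj: "a * cnj a = complex_of_real A2" unfolding A2_def complex_norm_square by (rule refl)
  have tt: "t * cnj t = complex_of_real (\<epsilon>^2 * A2)"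
  proof -
    have "t * cnj t = complex_of_real (\<epsilon>^2) * (a * cnj a)" by (simp add: t_def power2_eq_square algebra_simps)
    then show ?thesis by (simp add: acnj)
  qed
  have ta: "t * cnj a = complex_of_real (\<epsilon> * A2)"
  proof -
    have "t * cnj a = complex_of_real \<epsilon> * (a * cnj a)" by (simp add: t_def algebra_simps)
    then show ?thesis by (simp add: acnj)
  qed
  have ta2: "cnj t * a = complex_of_real (\<epsilon> * A2)"
  proof -
    have "cnj t * a = complex_of_real \<epsilon> * (a * cnj a)" by (simp add: t_def algebra_simps)
    then show ?thesis by (simp add: acnj)
  qed
  have hv0u: "herm v0 u = 0" using u(2) herm_sym[of u v0] by simp
  have "herm v v = 1 + t * cnj t * complex_of_real (nu^2)"
    unfolding v_def herm_expand using u(2) hv0u v0(2)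
    by (simp add: herm_self nu_def)
  then have "complex_of_real ((norm v)^2) = complex_of_real (1 + \<epsilon>^2 * A2 * nu^2)"
    by (simp add: herm_self tt)
  then have nv: "(norm v)^2 = 1 + \<epsilon>^2 * A2 * nu^2" using of_real_eq_iff by blast
  have gv: "g *v v = g *v v0 + t *s (g *v u)"
    by (simp add: v_def matrix_vector_right_distrib vector_scalar_commute)
  have "herm (g *v v) (g *v v) = complex_of_real (M^2) + t * cnj a + cnj t * a + t * cnj t * complex_of_real (N1^2)"
    unfolding gv herm_expand using herm_sym[of "g *v u" "g *v v0"]
    by (simp add: herm_self M_def N1_def a_def)
  then have "complex_of_real ((norm (g *v v))^2) = complex_of_real (M^2 + 2 * (\<epsilon> * A2) + \<epsilon>^2 * A2 * N1^2)"
    by (simp add: herm_self ta ta2 tt)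
  then have ngv: "(norm (g *v v))^2 = M^2 + 2 * (\<epsilon> * A2) + \<epsilon>^2 * A2 * N1^2" using of_real_eq_iff by blast
  have "(norm (g *v v))^2 \<le> (M * norm v)^2"
    using bnd[OF vC] by (simp add: power_mono)
  then have "M^2 + 2 * (\<epsilon> * A2) + \<epsilon>^2 * A2 * N1^2 \<le> M^2 * (1 + \<epsilon>^2 * A2 * nu^2)"
    using ngv nv by (simp add: power_mult_distrib)
  moreover have "\<epsilon>^2 * A2 * N1^2 \<ge> 0" using A2pos by simp
  ultimately have "2 * (\<epsilon> * A2) \<le> (\<epsilon> * X) * (\<epsilon> * A2)"
    by (simp add: X_def algebra_simps power2_eq_square)
  then have "2 \<le> \<epsilon> * X" using \<epsilon>pos A2pos by (simp add: mult_le_cancel_right)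
  moreover have "\<epsilon> * X < 1" using X0 by (simp add: \<epsilon>_def)
  ultimately show False by simp
qed



definition svd_inv :: "complex ^ 'n ^ 'n \<Rightarrow> (complex ^ 'n) set \<Rightarrow> bool" where
  "svd_inv g B \<longleftrightarrow> finite B \<and> (\<forall>b\<in>B. herm b b = 1) \<and> (\<forall>b\<in>B. \<forall>c\<in>B. b \<noteq> c \<longrightarrow> herm b c = 0)
     \<and> (\<forall>b\<in>B. \<forall>v\<in>Cperp B. herm (g *v b) (g *v v) = 0)
     \<and> (\<forall>b\<in>B. \<forall>c\<in>B. b \<noteq> c \<longrightarrow> herm (g *v b) (g *v c) = 0)"

lemma svd_step:
  fixes g :: "complex ^ 'n ^ 'n"
  assumes inv: "svd_inv g B" and lt: "card B < CARD('n)"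
  shows "\<exists>B'. svd_inv g B' \<and> card B' = Suc (card B)"
proof -
  have fin: "finite B" using inv by (simp add: svd_inv_def)
  define K where "K = sphere 0 1 \<inter> Cperp B"
  have cK: "compact K" unfolding K_def by (intro compact_Int_closed compact_sphere closed_Cperp)
  obtain v where "v \<in> Cperp B" "norm v = 1" using perp_exists[OF fin lt] by blast
  then have neK: "K \<noteq> {}" by (auto simp: K_def)
  have cont: "continuous_on K (\<lambda>y. norm (g *v y))"
    by (intro continuous_on_norm linear_continuous_on matrix_vector_mul_bounded_linear)
  obtain v0 where v0K: "v0 \<in> K" and mx: "\<forall>y\<in>K. norm (g *v y) \<le> norm (g *v v0)"
    using continuous_attains_sup[OF cK neK cont] by blast
  have v0C: "v0 \<in> Cperp B" and v0n: "norm v0 = 1" using v0K by (auto simp: K_def)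
  have mx': "\<forall>y\<in>Cperp B. norm y = 1 \<longrightarrow> norm (g *v y) \<le> norm (g *v v0)" using mx by (auto simp: K_def)
  have hv0: "herm v0 v0 = 1" using v0n by (simp add: herm_self)
  have v0B: "v0 \<notin> B"
  proof
    assume "v0 \<in> B"
    then have "herm v0 v0 = 0" using v0C by (simp add: Cperp_def)
    then show False using hv0 by simp
  qed
  define B' where "B' = insert v0 B"
  have pB: "Cperp B' \<subseteq> Cperp B" by (auto simp: B'_def Cperp_def)
  have sB': "svd_inv g B'"
    unfolding svd_inv_def
  proof (intro conjI ballI impI)
    show "finite B'" using fin by (simp add: B'_def)
  next
    fix b assume "b \<in> B'" then show "herm b b = 1" using inv hv0 by (auto simp: B'_def svd_inv_def)
  next
    fix b c assume bB: "b \<in> B'" and cB: "c \<in> B'" and bc: "b \<noteq> c"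
    have o1: "herm v0 c = 0" if "c \<in> B" for c using v0C that by (simp add: Cperp_def)
    have o2: "herm c v0 = 0" if "c \<in> B" for c using o1[OF that] herm_sym[of v0 c] by simp
    show "herm b c = 0" using bB cB bc inv o1 o2 by (auto simp: B'_def svd_inv_def)
  next
    fix b v assume bB: "b \<in> B'" and vC: "v \<in> Cperp B'"
    show "herm (g *v b) (g *v v) = 0"
    proof (cases "b = v0")
      case True
      have "herm v v0 = 0" using vC by (simp add: Cperp_def B'_def)
      then show ?thesis using True var_lemma[OF v0C v0n mx'] vC pB by blast
    next
      case False
      then have "b \<in> B" using bB by (simp add: B'_def)
      then show ?thesis using inv vC pB by (auto simp: svd_inv_def)
    qed
  next
    fix b c assume bB: "b \<in> B'" and cB: "c \<in> B'" and bc: "b \<noteq> c"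
    have o1: "herm (g *v c) (g *v v0) = 0" if "c \<in> B" for c using inv v0C that by (simp add: svd_inv_def)
    have o2: "herm (g *v v0) (g *v c) = 0" if "c \<in> B" for c
      using o1[OF that] herm_sym[of "g *v c" "g *v v0"] by simp
    show "herm (g *v b) (g *v c) = 0" using bB cB bc inv o1 o2 by (auto simp: B'_def svd_inv_def)
  qed
  moreover have "card B' = Suc (card B)" using fin v0B by (simp add: B'_def)
  ultimately show ?thesis by blast
qed

lemma svd_sets:
  fixes g :: "complex ^ 'n ^ 'n"
  shows "k \<le> CARD('n) \<Longrightarrow> \<exists>B. svd_inv g B \<and> card B = k"
proof (induction k)
  case 0
  have "svd_inv g {}" by (simp add: svd_inv_def)
  then show ?case by force
next
  case (Suc k)
  then obtain B where "svd_inv g B" "card B = k" by auto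
  then show ?case using svd_step[of g B] Suc.prems by auto
qed

lemma invertible_inj:
  fixes g :: "'a::field ^ 'n ^ 'n"
  assumes "invertible g" "g *v x = 0"
  shows "x = 0"
proof -
  obtain A' where "A' ** g = mat 1" using assms(1) by (auto simp: invertible_def)
  then have "x = A' *v (g *v x)" by (simp add: matrix_vector_mul_assoc)
  then show ?thesis using assms(2) by simp
qed

definition orthonormal_fam :: "complex ^ 'n ^ 'm \<Rightarrow> bool" where
  "orthonormal_fam w \<longleftrightarrow> (\<forall>i l. herm (w $ i) (w $ l) = (if i = l then 1 else 0))"

lemma svd:
  fixes g :: "complex ^ 'n ^ 'n"
  assumes ginv: "invertible g"
  shows "\<exists>(w::complex^'n^'n) (u::complex^'n^'n) d. orthonormal_fam w \<and> orthonormal_fam u \<and> (\<forall>i. d i > (0::real)) \<and>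
           (\<forall>i. g *v (w $ i) = complex_of_real (d i) *s (u $ i))"
proof -
  obtain B where sB: "svd_inv g B" and cB: "card B = CARD('n)" using svd_sets[of "CARD('n)" g] by auto
  have fin: "finite B" using sB by (simp add: svd_inv_def)
  obtain e where e: "bij_betw e (UNIV :: 'n set) B"
    using finite_same_card_bij[of "UNIV :: 'n set" B] fin cB by auto
  have eB: "e i \<in> B" for i using e by (auto simp: bij_betw_def)
  have einj: "e i = e l \<Longrightarrow> i = l" for i l using e by (auto simp: bij_betw_def inj_on_def)
  define w :: "complex ^ 'n ^ 'n" where "w = (\<chi> i. e i)"
  define d where "d i = norm (g *v e i)" for i
  define u :: "complex ^ 'n ^ 'n" where "u = (\<chi> i. complex_of_real (1 / d i) *s (g *v e i))"
  have he: "herm (e i) (e i) = 1" for i using sB eB by (simp add: svd_inv_def)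
  have dpos: "d i > 0" for i
  proof -
    have "e i \<noteq> 0" using he[of i] by auto
    then have "g *v e i \<noteq> 0" using invertible_inj[OF ginv] by blast
    then show ?thesis by (simp add: d_def)
  qed
  have ene: "e i \<noteq> e l" if "i \<noteq> l" for i l using einj that by blast
  have ow: "orthonormal_fam w"
    unfolding orthonormal_fam_def w_def using sB eB ene he by (auto simp: svd_inv_def)
  have ou: "orthonormal_fam u"
    unfolding orthonormal_fam_def
  proof (intro allI)
    fix i l
    show "herm (u $ i) (u $ l) = (if i = l then 1 else 0)"
    proof (cases "i = l")
      case True
      have "herm (g *v e i) (g *v e i) = complex_of_real ((d i)^2)" by (simp add: herm_self d_def)
      then show ?thesis using True dpos[of i]
        by (simp add: u_def herm_scale_left herm_scale_right power2_eq_square field_simps)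
    next
      case False
      then have "herm (g *v e i) (g *v e l) = 0" using sB eB ene by (auto simp: svd_inv_def)
      then show ?thesis using False by (simp add: u_def herm_scale_left herm_scale_right)
    qed
  qed
  have "g *v (w $ i) = complex_of_real (d i) *s (u $ i)" for i
    using dpos[of i] by (simp add: w_def u_def vector_smult_assoc)
  then show ?thesis using ow ou dpos by (intro exI[where x=w] exI[where x=u] exI[where x=d]) auto
qed



context vector_space begin

lemma dim_combo:
  fixes b :: "'i \<Rightarrow> 'b" and S :: "'i set"
  assumes fin: "finite S"
    and ind: "\<And>x. (\<Sum>i\<in>S. scale (x i) (b i)) = 0 \<Longrightarrow> \<forall>i\<in>S. x i = 0"
  shows "dim {\<Sum>i\<in>S. scale (x i) (b i) | x. True} = card S"
proof -
  have delta: "(\<Sum>k\<in>S. scale (if k = i then 1 else 0) (b k)) = b i" if iS: "i \<in> S" for i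
  proof -
    have "(\<Sum>k\<in>S. scale (if k = i then 1 else 0) (b k)) = scale (if i = i then 1 else 0) (b i) + (\<Sum>k\<in>S - {i}. scale (if k = i then 1 else 0) (b k))"
      by (rule sum.remove[OF fin iS])
    also have "(\<Sum>k\<in>S - {i}. scale (if k = i then 1 else 0) (b k)) = 0"
      by (rule sum.neutral) auto
    finally show ?thesis by simp
  qed
  have inj: "inj_on b S"
  proof (rule inj_onI, rule ccontr)
    fix i l assume iS: "i \<in> S" and lS: "l \<in> S" and e: "b i = b l" and ne: "i \<noteq> l"
    define x where "x k = (if k = i then 1 else 0) - (if k = l then 1 else (0::'a))" for k
    have "(\<Sum>k\<in>S. scale (x k) (b k)) = (\<Sum>k\<in>S. scale (if k = i then 1 else 0) (b k)) - (\<Sum>k\<in>S. scale (if k = l then 1 else 0) (b k))"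
      unfolding x_def by (simp add: scale_left_diff_distrib sum_subtractf)
    also have "\<dots> = 0" using delta[OF iS] delta[OF lS] e by simp
    finally have "x i = 0" using ind iS by blast
    then show False using ne by (simp add: x_def)
  qed
  have sp: "span (b ` S) = {\<Sum>i\<in>S. scale (x i) (b i) | x. True}"
  proof -
    have "span (b ` S) = range (\<lambda>u. \<Sum>v\<in>b ` S. scale (u v) v)"
      using fin by (simp add: span_finite)
    also have "\<dots> = range (\<lambda>u. \<Sum>i\<in>S. scale (u (b i)) (b i))"
      using inj by (simp add: sum.reindex)
    also have "\<dots> = {\<Sum>i\<in>S. scale (x i) (b i) | x. True}"
    proof (intro equalityI subsetI)
      fix y assume "y \<in> range (\<lambda>u. \<Sum>i\<in>S. scale (u (b i)) (b i))"
      then show "y \<in> {\<Sum>i\<in>S. scale (x i) (b i) | x. True}" by auto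
    next
      fix y assume "y \<in> {\<Sum>i\<in>S. scale (x i) (b i) | x. True}"
      then obtain x where y: "y = (\<Sum>i\<in>S. scale (x i) (b i))" by auto
      define u where "u v = x (inv_into S b v)" for v
      have "u (b i) = x i" if "i \<in> S" for i using inj that by (simp add: u_def)
      then have "y = (\<Sum>i\<in>S. scale (u (b i)) (b i))" unfolding y by (intro sum.cong) auto
      then show "y \<in> range (\<lambda>u. \<Sum>i\<in>S. scale (u (b i)) (b i))" by blast
    qed
    finally show ?thesis .
  qed
  have indep: "independent (b ` S)"
  proof (rule independent_if_scalars_zero)
    show "finite (b ` S)" using fin by simp
  next
    fix f v assume s0: "(\<Sum>x\<in>b ` S. scale (f x) x) = 0" and vS: "v \<in> b ` S"
    have "(\<Sum>i\<in>S. scale (f (b i)) (b i)) = 0" using s0 inj by (simp add: sum.reindex)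
    then have "\<forall>i\<in>S. f (b i) = 0" by (rule ind)
    then show "f v = 0" using vS by auto
  qed
  have "dim {\<Sum>i\<in>S. scale (x i) (b i) | x. True} = dim (span (b ` S))" using sp by simp
  also have "\<dots> = card (b ` S)" using indep by (simp add: dim_span dim_eq_card_independent)
  also have "\<dots> = card S" using inj by (simp add: card_image)
  finally show ?thesis .
qed

lemma subspace_combo:
  "subspace {\<Sum>i\<in>S. scale (x i) (b i) | x. True}"
proof (unfold subspace_def, intro conjI ballI allI)
  show "0 \<in> {\<Sum>i\<in>S. scale (x i) (b i) | x. True}"
    by (rule CollectI, rule exI[where x="\<lambda>i. 0"]) simp
next
  fix y z assume "y \<in> {\<Sum>i\<in>S. scale (x i) (b i) | x. True}" "z \<in> {\<Sum>i\<in>S. scale (x i) (b i) | x. True}"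
  then obtain x x' where "y = (\<Sum>i\<in>S. scale (x i) (b i))" "z = (\<Sum>i\<in>S. scale (x' i) (b i))" by auto
  then have "y + z = (\<Sum>i\<in>S. scale (x i + x' i) (b i))" by (simp add: scale_left_distrib sum.distrib)
  then show "y + z \<in> {\<Sum>i\<in>S. scale (x i) (b i) | x. True}" by (intro CollectI exI[where x="\<lambda>i. x i + x' i"]) simp
next
  fix c y assume "y \<in> {\<Sum>i\<in>S. scale (x i) (b i) | x. True}"
  then obtain x where "y = (\<Sum>i\<in>S. scale (x i) (b i))" by auto
  then have "scale c y = (\<Sum>i\<in>S. scale (c * x i) (b i))" by (simp add: scale_sum_right)
  then show "scale c y \<in> {\<Sum>i\<in>S. scale (x i) (b i) | x. True}" by (intro CollectI exI[where x="\<lambda>i. c * x i"]) simp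
qed

end

lemma vs_vscale: "vector_space (vscale :: complex \<Rightarrow> complex ^ 'n \<Rightarrow> complex ^ 'n)"
  by unfold_locales (auto simp: vscale_def vec_eq_iff algebra_simps)

lemma vs_pscale: "vector_space (pscale :: complex \<Rightarrow> (complex ^ 'n) \<times> (complex ^ 'n) \<Rightarrow> _)"
  by unfold_locales (auto simp: pscale_def vec_eq_iff algebra_simps prod_eq_iff)



lemma scaleR_cvec: "(r *\<^sub>R (v :: complex ^ 'm)) = complex_of_real r *s v"
proof (rule vec_eq_iff[THEN iffD2], rule allI)
  fix i
  have "(r *\<^sub>R v) $ i = r *\<^sub>R (v $ i)" by simp
  also have "\<dots> = complex_of_real r * v $ i" by (simp add: scaleR_conv_of_real)
  finally show "(r *\<^sub>R v) $ i = (complex_of_real r *s v) $ i" by simp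
qed

lemma sum_if_restrict:
  fixes x :: "'n::finite \<Rightarrow> complex"
  shows "(\<Sum>i\<in>UNIV. (if P i then x i else 0) *s (B i :: complex ^ 'm)) = (\<Sum>i\<in>{i. P i}. x i *s B i)"
proof -
  have "(\<Sum>i\<in>UNIV. (if P i then x i else 0) *s B i) = (\<Sum>i\<in>UNIV. if P i then x i *s B i else 0)"
    by (intro sum.cong) auto
  also have "\<dots> = (\<Sum>i\<in>{i\<in>UNIV. P i}. x i *s B i)" by (rule sum.inter_filter[symmetric]) simp
  finally show ?thesis by simp
qed

definition comb :: "complex ^ 'n ^ 'n \<Rightarrow> 'n set \<Rightarrow> (complex ^ 'n) set" where
  "comb W S = {\<Sum>i\<in>S. x i *s W $ i | x. True}"

lemma herm_lin:
  assumes "orthonormal_fam W"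
  shows "herm (\<Sum>i\<in>S. x i *s W $ i) (W $ l) = (if l \<in> S then x l else 0)"
proof -
  have "herm (\<Sum>i\<in>S. x i *s W $ i) (W $ l) = (\<Sum>i\<in>S. x i * (if i = l then 1 else 0))"
    using assms by (simp add: herm_sum_left herm_scale_left orthonormal_fam_def)
  also have "\<dots> = (\<Sum>i\<in>S. if i = l then x i else 0)" by (intro sum.cong) auto
  also have "\<dots> = (if l \<in> S then x l else 0)" by (simp add: sum.delta')
  finally show ?thesis .
qed

lemma lin_zero:
  assumes "orthonormal_fam W" "(\<Sum>i\<in>S. x i *s W $ i) = 0"
  shows "\<forall>i\<in>S. x i = 0"
  using herm_lin[OF assms(1), where S=S and x=x] assms(2) by (metis herm_zero_left)

lemma cdimV_comb:
  assumes "orthonormal_fam W"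
  shows "cdimV (comb W S) = card S"
proof -
  have "comb W S = {\<Sum>i\<in>S. vscale (x i) (W $ i) | x. True}" by (simp add: comb_def vscale_def)
  moreover have "vector_space.dim vscale {\<Sum>i\<in>S. vscale (x i) (W $ i) | x. True} = card S"
    by (rule vector_space.dim_combo[OF vs_vscale]) (auto simp: vscale_def dest: lin_zero[OF assms])
  ultimately show ?thesis by (simp add: cdimV_def)
qed

lemma linear_lincomb:
  "linear (\<lambda>a::complex ^ 'n. \<Sum>i\<in>UNIV. (k i * a $ i) *s (B i :: complex ^ 'm))"
  by (rule linearI) (simp_all add: scaleR_cvec vec_eq_iff sum_component sum_distrib_left
      sum.distrib algebra_simps)

lemma comb_UNIV:
  fixes W :: "complex ^ 'n ^ 'n"
  assumes on: "orthonormal_fam W"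
  shows "comb W UNIV = UNIV"
proof -
  define \<psi> where "\<psi> = (\<lambda>a::complex ^ 'n. \<Sum>i\<in>UNIV. (1 * a $ i) *s W $ i)"
  have lin: "linear \<psi>" unfolding \<psi>_def by (rule linear_lincomb)
  have inj: "inj_on \<psi> (span UNIV)"
  proof (rule linear_inj_on_iff_eq_0[OF lin subspace_span, THEN iffD2], intro ballI impI)
    fix a assume "\<psi> a = 0"
    then have "\<forall>i\<in>UNIV. a $ i = 0" using lin_zero[OF on, where S=UNIV and x="\<lambda>i. a $ i"] by (simp add: \<psi>_def)
    then show "a = 0" by (simp add: vec_eq_iff)
  qed
  have r: "range \<psi> = comb W UNIV"
  proof (intro equalityI subsetI)
    fix y assume "y \<in> range \<psi>" then show "y \<in> comb W UNIV" by (auto simp: \<psi>_def comb_def)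
  next
    fix y assume "y \<in> comb W UNIV"
    then obtain x where "y = (\<Sum>i\<in>UNIV. x i *s W $ i)" by (auto simp: comb_def)
    then have "y = \<psi> (\<chi> i. x i)" by (simp add: \<psi>_def)
    then show "y \<in> range \<psi>" by blast
  qed
  have "dim (range \<psi>) = dim (UNIV :: (complex ^ 'n) set)" by (rule dim_image_eq[OF lin inj])
  then have "span (range \<psi>) = UNIV" using dim_eq_full[of "range \<psi>"] by (simp only: dim_UNIV)
  moreover have "subspace (range \<psi>)" by (rule linear_subspace_image[OF lin subspace_UNIV])
  ultimately show ?thesis using r by (metis span_eq_iff)
qed



definition xco :: "('n \<Rightarrow> nat) \<Rightarrow> nat \<Rightarrow> complex ^ 'n \<Rightarrow> 'n \<Rightarrow> complex" where
  "xco f c a i = (if c \<le> f i then a $ i else 0)"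

definition yco :: "('n \<Rightarrow> nat) \<Rightarrow> ('n \<Rightarrow> complex) \<Rightarrow> nat \<Rightarrow> complex ^ 'n \<Rightarrow> 'n \<Rightarrow> complex" where
  "yco f lam c a i = (if f i < c then a $ i else if f i = c then lam i * a $ i else 0)"

definition psi :: "complex ^ 'n ^ 'n \<Rightarrow> complex ^ 'n ^ 'n \<Rightarrow> ('n \<Rightarrow> nat) \<Rightarrow> ('n \<Rightarrow> complex) \<Rightarrow> nat
    \<Rightarrow> complex ^ 'n \<Rightarrow> (complex ^ 'n) \<times> (complex ^ 'n)" where
  "psi W U f lam c a = (\<Sum>i\<in>UNIV. xco f c a i *s W $ i, \<Sum>i\<in>UNIV. yco f lam c a i *s U $ i)"

definition Pc :: "complex ^ 'n ^ 'n \<Rightarrow> complex ^ 'n ^ 'n \<Rightarrow> ('n \<Rightarrow> nat) \<Rightarrow> ('n \<Rightarrow> complex) \<Rightarrow> nat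
    \<Rightarrow> ((complex ^ 'n) \<times> (complex ^ 'n)) set" where
  "Pc W U f lam c = range (psi W U f lam c)"

lemma comb_vec: "{\<Sum>i\<in>S. a $ i *s W $ i | a. True} = comb W S"
proof (intro equalityI subsetI)
  fix y assume "y \<in> {\<Sum>i\<in>S. a $ i *s W $ i | a. True}" then show "y \<in> comb W S" by (auto simp: comb_def)
next
  fix y assume "y \<in> comb W S"
  then obtain x where "y = (\<Sum>i\<in>S. x i *s W $ i)" by (auto simp: comb_def)
  then have "y = (\<Sum>i\<in>S. (\<chi> i. x i) $ i *s W $ i)" by simp
  then show "y \<in> {\<Sum>i\<in>S. a $ i *s W $ i | a. True}" by blast
qed

lemma sum_xco: "(\<Sum>i\<in>UNIV. xco f c a i *s W $ i) = (\<Sum>i\<in>{i. c \<le> f i}. a $ i *s W $ i)"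
  unfolding xco_def by (rule sum_if_restrict)

lemma Dom_Pc: "Dom (Pc W U f lam c) = comb W {i. c \<le> f i}"
proof -
  have "Dom (Pc W U f lam c) = range (\<lambda>a. fst (psi W U f lam c a))"
    by (simp add: Dom_def Pc_def image_image)
  also have "\<dots> = range (\<lambda>a. \<Sum>i\<in>{i. c \<le> f i}. a $ i *s W $ i)" by (simp add: psi_def sum_xco)
  also have "\<dots> = {\<Sum>i\<in>{i. c \<le> f i}. a $ i *s W $ i | a. True}" by (simp add: full_SetCompr_eq)
  finally show ?thesis using comb_vec[where S="{i. c \<le> f i}" and W=W] by simp
qed

lemma Ker_Pc:
  assumes oU: "orthonormal_fam U" and lamnz: "\<forall>i. f i = c \<longrightarrow> lam i \<noteq> 0"
  shows "Ker (Pc W U f lam c) = comb W {i. c < f i}"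
proof (intro equalityI subsetI)
  fix v assume "v \<in> Ker (Pc W U f lam c)"
  then obtain a where e: "psi W U f lam c a = (v, 0)" by (auto simp: Ker_def Pc_def)
  then have "(\<Sum>i\<in>UNIV. yco f lam c a i *s U $ i) = 0" by (simp add: psi_def)
  then have y0: "\<forall>i\<in>UNIV. yco f lam c a i = 0" by (rule lin_zero[OF oU])
  have a0: "a $ i = 0" if "f i \<le> c" for i
    using y0 lamnz that by (auto simp: yco_def split: if_splits) (metis le_neq_implies_less)
  have "v = (\<Sum>i\<in>UNIV. xco f c a i *s W $ i)" using e by (simp add: psi_def)
  also have "\<dots> = (\<Sum>i\<in>UNIV. (if c < f i then a $ i else 0) *s W $ i)"
    using a0 by (intro sum.cong) (auto simp: xco_def)
  also have "\<dots> = (\<Sum>i\<in>{i. c < f i}. a $ i *s W $ i)" by (rule sum_if_restrict)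
  finally show "v \<in> comb W {i. c < f i}" by (auto simp: comb_def)
next
  fix v assume "v \<in> comb W {i. c < f i}"
  then obtain x where v: "v = (\<Sum>i\<in>{i. c < f i}. x i *s W $ i)" by (auto simp: comb_def)
  define a where "a = (\<chi> i. if c < f i then x i else 0)"
  have "(\<Sum>i\<in>UNIV. xco f c a i *s W $ i) = (\<Sum>i\<in>UNIV. (if c < f i then x i else 0) *s W $ i)"
    by (intro sum.cong) (auto simp: xco_def a_def)
  also have "\<dots> = v" unfolding v by (rule sum_if_restrict)
  finally have 1: "(\<Sum>i\<in>UNIV. xco f c a i *s W $ i) = v" .
  have "yco f lam c a i = 0" for i by (auto simp: yco_def a_def)
  then have "psi W U f lam c a = (v, 0)" using 1 by (simp add: psi_def)
  then have "(v, 0) \<in> Pc W U f lam c" unfolding Pc_def by (metis rangeI)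
  then show "v \<in> Ker (Pc W U f lam c)" by (simp add: Ker_def)
qed

lemma Im_Pc:
  assumes lamnz: "\<forall>i. f i = c \<longrightarrow> lam i \<noteq> 0"
  shows "Im (Pc W U f lam c) = comb U {i. f i \<le> c}"
proof (intro equalityI subsetI)
  fix w assume "w \<in> Im (Pc W U f lam c)"
  then obtain a where w: "w = (\<Sum>i\<in>UNIV. yco f lam c a i *s U $ i)" by (auto simp: Im_def Pc_def psi_def)
  also have "\<dots> = (\<Sum>i\<in>UNIV. (if f i \<le> c then yco f lam c a i else 0) *s U $ i)"
    by (intro sum.cong) (auto simp: yco_def)
  also have "\<dots> = (\<Sum>i\<in>{i. f i \<le> c}. yco f lam c a i *s U $ i)" by (rule sum_if_restrict)
  finally show "w \<in> comb U {i. f i \<le> c}" by (auto simp: comb_def)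
next
  fix w assume "w \<in> comb U {i. f i \<le> c}"
  then obtain x where w: "w = (\<Sum>i\<in>{i. f i \<le> c}. x i *s U $ i)" by (auto simp: comb_def)
  define a where "a = (\<chi> i. if f i < c then x i else if f i = c then x i / lam i else 0)"
  have "(\<Sum>i\<in>UNIV. yco f lam c a i *s U $ i) = (\<Sum>i\<in>UNIV. (if f i \<le> c then x i else 0) *s U $ i)"
    using lamnz by (intro sum.cong) (auto simp: yco_def a_def)
  also have "\<dots> = w" unfolding w by (rule sum_if_restrict)
  finally have "snd (psi W U f lam c a) = w" by (simp add: psi_def)
  then show "w \<in> Im (Pc W U f lam c)" by (auto simp: Im_def Pc_def)
qed

lemma Indef_Pc:
  assumes oW: "orthonormal_fam W"
  shows "Indef (Pc W U f lam c) = comb U {i. f i < c}"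
proof (intro equalityI subsetI)
  fix w assume "w \<in> Indef (Pc W U f lam c)"
  then obtain a where e: "psi W U f lam c a = (0, w)" by (auto simp: Indef_def Pc_def)
  then have "(\<Sum>i\<in>UNIV. xco f c a i *s W $ i) = 0" by (simp add: psi_def)
  then have x0: "\<forall>i\<in>UNIV. xco f c a i = 0" by (rule lin_zero[OF oW])
  have a0: "a $ i = 0" if "c \<le> f i" for i using x0[rule_format, of i] that by (simp add: xco_def)
  have "w = (\<Sum>i\<in>UNIV. yco f lam c a i *s U $ i)" using e by (simp add: psi_def)
  also have "\<dots> = (\<Sum>i\<in>UNIV. (if f i < c then a $ i else 0) *s U $ i)"
    using a0 by (intro sum.cong) (auto simp: yco_def)
  also have "\<dots> = (\<Sum>i\<in>{i. f i < c}. a $ i *s U $ i)" by (rule sum_if_restrict)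
  finally show "w \<in> comb U {i. f i < c}" by (auto simp: comb_def)
next
  fix w assume "w \<in> comb U {i. f i < c}"
  then obtain x where w: "w = (\<Sum>i\<in>{i. f i < c}. x i *s U $ i)" by (auto simp: comb_def)
  define a where "a = (\<chi> i. if f i < c then x i else 0)"
  have "(\<Sum>i\<in>UNIV. yco f lam c a i *s U $ i) = (\<Sum>i\<in>UNIV. (if f i < c then x i else 0) *s U $ i)"
    by (intro sum.cong) (auto simp: yco_def a_def)
  also have "\<dots> = w" unfolding w by (rule sum_if_restrict)
  finally have 1: "(\<Sum>i\<in>UNIV. yco f lam c a i *s U $ i) = w" .
  have "xco f c a i = 0" for i by (auto simp: xco_def a_def)
  then have "psi W U f lam c a = (0, w)" using 1 by (simp add: psi_def)
  then have "(0, w) \<in> Pc W U f lam c" unfolding Pc_def by (metis rangeI)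
  then show "w \<in> Indef (Pc W U f lam c)" by (simp add: Indef_def)
qed



definition bP :: "complex ^ 'n ^ 'n \<Rightarrow> complex ^ 'n ^ 'n \<Rightarrow> ('n \<Rightarrow> nat) \<Rightarrow> ('n \<Rightarrow> complex) \<Rightarrow> nat
    \<Rightarrow> 'n \<Rightarrow> (complex ^ 'n) \<times> (complex ^ 'n)" where
  "bP W U f lam c i = (if c \<le> f i then W $ i else 0, if f i < c then U $ i else if f i = c then lam i *s U $ i else 0)"

lemma sum_pscale: "(\<Sum>i\<in>S. pscale (x i) (p i)) = (\<Sum>i\<in>S. x i *s fst (p i), \<Sum>i\<in>S. x i *s snd (p i))"
  by (simp add: prod_eq_iff fst_sum snd_sum pscale_def)

lemma psi_pscale: "psi W U f lam c a = (\<Sum>i\<in>UNIV. pscale (a $ i) (bP W U f lam c i))"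
proof -
  have 1: "a $ i *s fst (bP W U f lam c i) = xco f c a i *s W $ i" for i
    by (simp add: bP_def xco_def)
  have 2: "a $ i *s snd (bP W U f lam c i) = yco f lam c a i *s U $ i" for i
    by (simp add: bP_def yco_def vector_smult_assoc mult.commute)
  show ?thesis unfolding sum_pscale psi_def by (simp add: 1 2)
qed

lemma Pc_combo: "Pc W U f lam c = {\<Sum>i\<in>UNIV. pscale (x i) (bP W U f lam c i) | x. True}"
proof (intro equalityI subsetI)
  fix p assume "p \<in> Pc W U f lam c"
  then show "p \<in> {\<Sum>i\<in>UNIV. pscale (x i) (bP W U f lam c i) | x. True}"
    by (auto simp: Pc_def psi_pscale)
next
  fix p assume "p \<in> {\<Sum>i\<in>UNIV. pscale (x i) (bP W U f lam c i) | x. True}"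
  then obtain x where "p = (\<Sum>i\<in>UNIV. pscale (x i) (bP W U f lam c i))" by auto
  then have "p = psi W U f lam c (\<chi> i. x i)" by (simp add: psi_pscale)
  then show "p \<in> Pc W U f lam c" by (simp add: Pc_def)
qed

lemma psi_zero:
  assumes oW: "orthonormal_fam W" and oU: "orthonormal_fam U" and z: "psi W U f lam c a = 0"
  shows "a = 0"
proof -
  have "(\<Sum>i\<in>UNIV. xco f c a i *s W $ i) = 0" using z by (simp add: psi_def prod_eq_iff)
  then have x0: "\<forall>i\<in>UNIV. xco f c a i = 0" by (rule lin_zero[OF oW])
  have "(\<Sum>i\<in>UNIV. yco f lam c a i *s U $ i) = 0" using z by (simp add: psi_def prod_eq_iff)
  then have y0: "\<forall>i\<in>UNIV. yco f lam c a i = 0" by (rule lin_zero[OF oU])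
  have "a $ i = 0" for i
  proof (cases "c \<le> f i")
    case True then show ?thesis using x0[rule_format, of i] by (simp add: xco_def)
  next
    case False then show ?thesis using y0[rule_format, of i] by (simp add: yco_def)
  qed
  then show ?thesis by (simp add: vec_eq_iff)
qed

lemma csub2_Pc: "csub2 (Pc W U f lam c)"
  unfolding csub2_def Pc_combo by (rule vector_space.subspace_combo[OF vs_pscale])

lemma cdim2_Pc:
  fixes W U :: "complex ^ 'n ^ 'n"
  assumes oW: "orthonormal_fam W" and oU: "orthonormal_fam U"
  shows "cdim2 (Pc W U f lam c) = CARD('n)"
  unfolding cdim2_def Pc_combo
proof (rule vector_space.dim_combo[OF vs_pscale])
  show "finite (UNIV :: 'n set)" by simp
next
  fix x :: "'n \<Rightarrow> complex" assume "(\<Sum>i\<in>UNIV. pscale (x i) (bP W U f lam c i)) = 0"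
  then have "psi W U f lam c (\<chi> i. x i) = 0" by (simp add: psi_pscale)
  then have "(\<chi> i. x i) = 0" by (rule psi_zero[OF oW oU])
  then show "\<forall>i\<in>UNIV. x i = 0" by (simp add: vec_eq_iff)
qed

lemma linear_pairI:
  assumes "linear f1" "linear f2"
  shows "linear (\<lambda>a. (f1 a, f2 a))"
  using assms by (intro linearI) (simp_all add: linear_add linear_scale)

lemma linear_psi: "linear (psi W U f lam c)"
proof -
  have 1: "psi W U f lam c = (\<lambda>a. (\<Sum>i\<in>UNIV. ((if c \<le> f i then 1 else 0) * a $ i) *s W $ i,
      \<Sum>i\<in>UNIV. ((if f i < c then 1 else if f i = c then lam i else 0) * a $ i) *s U $ i))"
    unfolding psi_def xco_def yco_def by (intro ext prod_eqI) (simp_all, (intro sum.cong refl; auto)+)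
  show ?thesis unfolding 1 by (intro linear_pairI linear_lincomb)
qed

lemma real_Pc:
  fixes W U :: "complex ^ 'n ^ 'n"
  assumes oW: "orthonormal_fam W" and oU: "orthonormal_fam U"
  shows "subspace (Pc W U f lam c) \<and> dim (Pc W U f lam c) = dim (UNIV :: (complex ^ 'n) set)"
proof
  show "subspace (Pc W U f lam c)" unfolding Pc_def by (rule linear_subspace_image[OF linear_psi subspace_UNIV])
  have inj: "inj_on (psi W U f lam c) (span UNIV)"
    by (rule linear_inj_on_iff_eq_0[OF linear_psi subspace_span, THEN iffD2]) (auto intro: psi_zero[OF oW oU])
  show "dim (Pc W U f lam c) = dim (UNIV :: (complex ^ 'n) set)"
    unfolding Pc_def by (rule dim_image_eq[OF linear_psi inj])
qed

lemma mat_vec_c: "(mat c ** (A :: complex ^ 'n ^ 'n)) *v v = c *s (A *v v)"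
proof -
  have "mat c *v x = c *s x" for x :: "complex ^ 'n"
  proof (rule vec_eq_iff[THEN iffD2], rule allI)
    fix i
    have "(mat c *v x) $ i = (\<Sum>j\<in>UNIV. (if i = j then c else 0) * x $ j)"
      by (simp add: matrix_vector_mult_def mat_def)
    also have "\<dots> = (\<Sum>j\<in>UNIV. if j = i then c * x $ i else 0)" by (rule sum.cong) auto
    also have "\<dots> = c * x $ i" by simp
    finally show "(mat c *v x) $ i = (c *s x) $ i" by simp
  qed
  then show ?thesis by (simp add: matrix_vector_mul_assoc[symmetric])
qed

lemma real_graph:
  fixes A :: "complex ^ 'n ^ 'n"
  shows "subspace (graph A) \<and> dim (graph A) = dim (UNIV :: (complex ^ 'n) set)"
proof
  have g: "graph A = range (\<lambda>v. (v, A *v v))" by (simp add: graph_def full_SetCompr_eq)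
  have lin: "linear (\<lambda>v. (v, A *v v))" by (intro linear_pairI linear_ident matrix_vector_mul_linear)
  show "subspace (graph A)" unfolding g by (rule linear_subspace_image[OF lin subspace_UNIV])
  have inj: "inj_on (\<lambda>v. (v, A *v v)) (span UNIV)" by (auto intro: inj_onI)
  show "dim (graph A) = dim (UNIV :: (complex ^ 'n) set)"
    unfolding g by (rule dim_image_eq[OF lin inj])
qed



locale ratio_data =
  fixes D :: "nat \<Rightarrow> 'n::finite \<Rightarrow> real" and S :: "real ^ ('n \<times> 'n)"
  assumes Dpos: "\<And>j i. D j i > 0"
    and Slim: "\<And>a b. (\<lambda>j. D j a / (D j a + D j b)) \<longlonglongrightarrow> S $ (a, b)"
begin

lemma S_bounds: "0 \<le> S $ (a, b) \<and> S $ (a, b) \<le> 1"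
proof
  have "D j a / (D j a + D j b) \<ge> 0" for j using Dpos[of j a] Dpos[of j b] by simp
  then show "0 \<le> S $ (a, b)" by (intro LIMSEQ_le_const[OF Slim]) auto
  have "D j a / (D j a + D j b) \<le> 1" for j using Dpos[of j a] Dpos[of j b] by simp
  then show "S $ (a, b) \<le> 1" by (intro LIMSEQ_le_const2[OF Slim]) auto
qed

lemma S_sum: "S $ (a, b) + S $ (b, a) = 1"
proof -
  have "(\<lambda>j. D j a / (D j a + D j b) + D j b / (D j b + D j a)) \<longlonglongrightarrow> S $ (a, b) + S $ (b, a)"
    by (intro tendsto_add Slim)
  moreover have "D j a / (D j a + D j b) + D j b / (D j b + D j a) = 1" for j
  proof -
    have "D j a + D j b > 0" using Dpos[of j a] Dpos[of j b] by simp
    then show ?thesis by (simp add: add.commute[of "D j b"] add_divide_distrib[symmetric])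
  qed
  ultimately have "(\<lambda>j. 1::real) \<longlonglongrightarrow> S $ (a, b) + S $ (b, a)" by simp
  then show ?thesis using LIMSEQ_unique tendsto_const by metis
qed

lemma S_diag: "S $ (a, a) = 1/2"
  using S_sum[of a a] by simp

lemma R3:
  assumes "S $ (a, b) > 0"
  shows "(\<lambda>j. D j b / D j a) \<longlonglongrightarrow> (1 - S $ (a, b)) / S $ (a, b)"
proof -
  have "(\<lambda>j. (1 - D j a / (D j a + D j b)) / (D j a / (D j a + D j b))) \<longlonglongrightarrow> (1 - S $ (a, b)) / S $ (a, b)"
    using assms by (intro tendsto_divide tendsto_diff tendsto_const Slim) auto
  moreover have eq: "(1 - D j a / (D j a + D j b)) / (D j a / (D j a + D j b)) = D j b / D j a" for j
  proof -
    have p: "D j a + D j b > 0" "D j a > 0" using Dpos[of j a] Dpos[of j b] by simp_all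
    then have "1 - D j a / (D j a + D j b) = D j b / (D j a + D j b)" by (simp add: field_simps)
    then show ?thesis using p by simp
  qed
  ultimately show ?thesis by (simp only: eq)
qed

lemma R4:
  assumes "(\<lambda>j. D j b / D j a) \<longlonglongrightarrow> 0"
  shows "S $ (a, b) = 1"
proof -
  have "(\<lambda>j. 1 / (1 + D j b / D j a)) \<longlonglongrightarrow> 1 / (1 + 0)"
    by (intro tendsto_divide tendsto_add tendsto_const assms) simp
  moreover have "1 / (1 + D j b / D j a) = D j a / (D j a + D j b)" for j
    using Dpos[of j a] Dpos[of j b] by (simp add: field_simps)
  ultimately have "(\<lambda>j. D j a / (D j a + D j b)) \<longlonglongrightarrow> 1" by simp
  then show ?thesis using LIMSEQ_unique Slim by blast
qed

lemma negl_iff: "S $ (a, b) = 0 \<longleftrightarrow> (\<lambda>j. D j a / D j b) \<longlonglongrightarrow> 0"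
proof
  assume "S $ (a, b) = 0"
  then have "S $ (b, a) = 1" using S_sum[of a b] by simp
  then show "(\<lambda>j. D j a / D j b) \<longlonglongrightarrow> 0" using R3[of b a] by simp
next
  assume "(\<lambda>j. D j a / D j b) \<longlonglongrightarrow> 0"
  then have "S $ (b, a) = 1" by (rule R4)
  then show "S $ (a, b) = 0" using S_sum[of a b] by simp
qed

lemma negl_trans:
  assumes "(\<lambda>j. D j x / D j y) \<longlonglongrightarrow> 0" "(\<lambda>j. D j z / D j x) \<longlonglongrightarrow> t"
  shows "(\<lambda>j. D j z / D j y) \<longlonglongrightarrow> 0"
proof -
  have "(\<lambda>j. (D j z / D j x) * (D j x / D j y)) \<longlonglongrightarrow> t * 0" by (intro tendsto_mult assms)
  moreover have eq: "(D j z / D j x) * (D j x / D j y) = D j z / D j y" for j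
    using Dpos[of j x] by simp
  ultimately show ?thesis by (simp only: eq mult_zero_right)
qed

definition frk :: "'n \<Rightarrow> nat" where
  "frk i = card {l. S $ (i, l) = 0}"

lemma T1:
  assumes "S $ (m, i) = 0"
  shows "frk i < frk m"
proof -
  have sub: "{l. S $ (i, l) = 0} \<subseteq> {l. S $ (m, l) = 0}"
  proof
    fix l assume "l \<in> {l. S $ (i, l) = 0}"
    then have 1: "(\<lambda>j. D j i / D j l) \<longlonglongrightarrow> 0" by (simp add: negl_iff)
    have 2: "(\<lambda>j. D j m / D j i) \<longlonglongrightarrow> 0" using assms by (simp add: negl_iff)
    have "(\<lambda>j. D j m / D j l) \<longlonglongrightarrow> 0" by (rule negl_trans[OF 1 2])
    then show "l \<in> {l. S $ (m, l) = 0}" by (simp add: negl_iff)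
  qed
  have "i \<in> {l. S $ (m, l) = 0}" using assms by simp
  moreover have "i \<notin> {l. S $ (i, l) = 0}" by (simp add: S_diag)
  ultimately have "{l. S $ (i, l) = 0} \<subset> {l. S $ (m, l) = 0}" using sub by blast
  then show ?thesis unfolding frk_def by (rule psubset_card_mono[rotated]) simp
qed

lemma T2:
  assumes "0 < S $ (m, i)" "S $ (m, i) < 1"
  shows "frk i = frk m"
proof -
  have sim: "0 < S $ (i, m)" using assms S_sum[of m i] by simp
  have "{l. S $ (i, l) = 0} = {l. S $ (m, l) = 0}"
  proof (intro equalityI subsetI)
    fix l assume "l \<in> {l. S $ (i, l) = 0}"
    then have 1: "(\<lambda>j. D j i / D j l) \<longlonglongrightarrow> 0" by (simp add: negl_iff)
    have "(\<lambda>j. D j m / D j l) \<longlonglongrightarrow> 0" by (rule negl_trans[OF 1 R3[OF sim]])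
    then show "l \<in> {l. S $ (m, l) = 0}" by (simp add: negl_iff)
  next
    fix l assume "l \<in> {l. S $ (m, l) = 0}"
    then have 1: "(\<lambda>j. D j m / D j l) \<longlonglongrightarrow> 0" by (simp add: negl_iff)
    have "(\<lambda>j. D j i / D j l) \<longlonglongrightarrow> 0" by (rule negl_trans[OF 1 R3[OF assms(1)]])
    then show "l \<in> {l. S $ (i, l) = 0}" by (simp add: negl_iff)
  qed
  then show ?thesis by (simp add: frk_def)
qed

lemma trich: "S $ (m, i) = 0 \<or> S $ (i, m) = 0 \<or> (0 < S $ (m, i) \<and> S $ (m, i) < 1)"
  using S_bounds[of m i] S_sum[of m i] by auto

lemma C1: "frk i < frk m \<Longrightarrow> (\<lambda>j. D j m / D j i) \<longlonglongrightarrow> 0"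
  using trich[of m i] T1[of i m] T2[of m i] by (auto simp: negl_iff[symmetric])

lemma C2: "frk i = frk m \<Longrightarrow> 0 < S $ (m, i) \<and> S $ (m, i) < 1"
  using trich[of m i] T1[of i m] T1[of m i] by auto

lemma C3: "frk m < frk i \<Longrightarrow> (\<lambda>j. D j i / D j m) \<longlonglongrightarrow> 0"
  using trich[of m i] T1[of m i] T2[of m i] by (auto simp: negl_iff[symmetric])

end



lemma tendsto_cscale:
  fixes v :: "'a \<Rightarrow> complex ^ 'm"
  assumes "(c \<longlongrightarrow> c0) F" "(v \<longlongrightarrow> v0) F"
  shows "((\<lambda>x. c x *s v x) \<longlongrightarrow> c0 *s v0) F"
proof (rule vec_tendstoI)
  fix i
  show "((\<lambda>x. (c x *s v x) $ i) \<longlongrightarrow> (c0 *s v0) $ i) F"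
    using tendsto_mult[OF assms(1) tendsto_vec_nth[OF assms(2), of i]] by simp
qed

lemma tendsto_lincomb:
  fixes V :: "nat \<Rightarrow> 'n::finite \<Rightarrow> complex ^ 'm"
  assumes "\<And>i. (\<lambda>j. cf j i) \<longlonglongrightarrow> c0 i" "\<And>i. (\<lambda>j. V j i) \<longlonglongrightarrow> V0 i"
  shows "(\<lambda>j. \<Sum>i\<in>UNIV. cf j i *s V j i) \<longlonglongrightarrow> (\<Sum>i\<in>UNIV. c0 i *s V0 i)"
  by (intro tendsto_sum tendsto_cscale assms)

lemma matvec_sum:
  fixes g :: "complex ^ 'n ^ 'm"
  shows "g *v (\<Sum>i\<in>S. c i *s v i) = (\<Sum>i\<in>S. c i *s (g *v v i))"
  by (induction S rule: infinite_finite_induct)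
     (simp_all add: matrix_vector_right_distrib vector_scalar_commute)

lemma norm_onf:
  fixes w :: "complex ^ 'n ^ 'm"
  assumes "orthonormal_fam w"
  shows "norm w \<le> real CARD('m)"
proof -
  have n1: "norm (w $ i) = 1" for i
  proof -
    have "herm (w $ i) (w $ i) = 1" using assms by (simp add: orthonormal_fam_def)
    then have "complex_of_real ((norm (w $ i))^2) = complex_of_real 1" by (simp only: herm_self) simp
    then have "(norm (w $ i))^2 = 1" by (simp only: of_real_eq_iff)
    then show ?thesis using norm_ge_zero[of "w $ i"] by (auto simp: power2_eq_1_iff)
  qed
  have "norm w = L2_set (\<lambda>i. norm (w $ i)) UNIV" by (simp add: norm_vec_def)
  also have "\<dots> \<le> (\<Sum>i\<in>UNIV. norm (w $ i))" by (rule L2_set_le_sum) simp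
  also have "\<dots> = real CARD('m)" by (simp add: n1)
  finally show ?thesis .
qed

lemma norm_cube:
  fixes v :: "real ^ 'k"
  assumes "\<And>k. 0 \<le> v $ k \<and> v $ k \<le> 1"
  shows "norm v \<le> real CARD('k)"
proof -
  have "norm v = L2_set (\<lambda>i. norm (v $ i)) UNIV" by (simp add: norm_vec_def)
  also have "\<dots> \<le> (\<Sum>i\<in>UNIV. norm (v $ i))" by (rule L2_set_le_sum) simp
  also have "\<dots> \<le> (\<Sum>i\<in>(UNIV::'k set). 1)" by (rule sum_mono) (use assms in auto)
  also have "\<dots> = real CARD('k)" by simp
  finally show ?thesis .
qed

lemma sorted_idx:
  fixes L :: "nat list"
  assumes "sorted_wrt (<) L" "t < length L" "s < length L"
  shows "L ! t \<le> L ! s \<longleftrightarrow> t \<le> s"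
  using sorted_wrt_nth_less[OF assms(1), of t s] sorted_wrt_nth_less[OF assms(1), of s t] assms(2,3)
  by (cases t s rule: linorder_cases) auto

lemma sorted_idx_less:
  fixes L :: "nat list"
  assumes "sorted_wrt (<) L" "t < length L" "s < length L"
  shows "L ! t < L ! s \<longleftrightarrow> t < s"
  using sorted_idx[OF assms(1,3,2)] by linarith



theorem lemma2p1:
  fixes g :: "nat \<Rightarrow> complex ^ 'n ^ 'n"
  assumes "\<forall>j. invertible (g j)"
  shows "\<exists>r Ps \<beta>. strict_mono r \<and> is_hinge Ps \<and>
           (\<forall>\<sigma> < length Ps. (\<forall>j. \<beta> \<sigma> j \<noteq> (0::complex)) \<and>
              gr_tendsto (\<lambda>j. graph (mat (\<beta> \<sigma> j) ** g (r j))) (Ps ! \<sigma>))"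
proof -
  have "\<forall>j. \<exists>(w::complex^'n^'n) (u::complex^'n^'n) d. orthonormal_fam w \<and> orthonormal_fam u \<and> (\<forall>i. d i > (0::real)) \<and>
           (\<forall>i. g j *v (w $ i) = complex_of_real (d i) *s (u $ i))"
    using svd assms by blast
  then obtain sw su sd where
    sw: "\<And>j. orthonormal_fam (sw j :: complex^'n^'n)" and su: "\<And>j. orthonormal_fam (su j :: complex^'n^'n)"
    and sd: "\<And>j i. sd j i > (0::real)" and sg: "\<And>j i. g j *v (sw j $ i) = complex_of_real (sd j i) *s (su j $ i)"
    by metis
  define sr :: "nat \<Rightarrow> real ^ ('n \<times> 'n)" where
    "sr j = (\<chi> p. sd j (fst p) / (sd j (fst p) + sd j (snd p)))" for j
  define z where "z j = (sw j, su j, sr j)" for j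
  have "bounded (range z)"
  proof -
    have "norm (z j) \<le> real CARD('n) + real CARD('n) + real CARD('n \<times> 'n)" for j
    proof -
      have "norm (z j) \<le> norm (sw j) + (norm (su j) + norm (sr j))"
        unfolding z_def by (meson add_left_mono norm_Pair_le order_trans)
      moreover have "norm (sw j) \<le> real CARD('n)" "norm (su j) \<le> real CARD('n)"
        using norm_onf[OF sw] norm_onf[OF su] by auto
      moreover have "norm (sr j) \<le> real CARD('n \<times> 'n)"
      proof (rule norm_cube)
        fix k :: "'n \<times> 'n"
        show "0 \<le> sr j $ k \<and> sr j $ k \<le> 1"
          using sd[of j "fst k"] sd[of j "snd k"] by (simp add: sr_def)
      qed
      ultimately show ?thesis by linarith
    qed
    then show ?thesis unfolding bounded_iff by blast
  qed
  then obtain l r where r: "strict_mono r" and zl: "(z \<circ> r) \<longlonglongrightarrow> l"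
    using bounded_imp_convergent_subsequence by blast
  obtain W U S where lWUS: "l = (W, U, S)" by (cases l) auto
  have zl': "(\<lambda>j. (sw (r j), su (r j), sr (r j))) \<longlonglongrightarrow> (W, U, S)"
    using zl lWUS by (simp add: z_def o_def)
  have Wl: "(\<lambda>j. sw (r j)) \<longlonglongrightarrow> W" using tendsto_fst[OF zl'] by simp
  have Ul: "(\<lambda>j. su (r j)) \<longlonglongrightarrow> U" using tendsto_fst[OF tendsto_snd[OF zl']] by simp
  have Sl: "(\<lambda>j. sr (r j)) \<longlonglongrightarrow> S" using tendsto_snd[OF tendsto_snd[OF zl']] by simp
  have onf_lim: "orthonormal_fam X" if Xl: "(\<lambda>j. sx (r j)) \<longlonglongrightarrow> X" and ox: "\<And>j. orthonormal_fam (sx j)"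
    for X :: "complex ^ 'n ^ 'n" and sx :: "nat \<Rightarrow> complex ^ 'n ^ 'n"
  proof -
    have "herm (X $ i) (X $ k) = (if i = k then 1 else 0)" for i k
    proof -
      have "(\<lambda>j. herm (sx (r j) $ i) (sx (r j) $ k)) \<longlonglongrightarrow> herm (X $ i) (X $ k)"
        by (intro tendsto_herm tendsto_vec_nth Xl)
      moreover have "herm (sx (r j) $ i) (sx (r j) $ k) = (if i = k then 1 else 0)" for j
        using ox[of "r j"] by (simp add: orthonormal_fam_def)
      ultimately have "(\<lambda>j. (if i = k then 1 else 0) :: complex) \<longlonglongrightarrow> herm (X $ i) (X $ k)" by simp
      then show ?thesis using LIMSEQ_unique tendsto_const by metis
    qed
    then show ?thesis by (simp add: orthonormal_fam_def)
  qed
  have oW: "orthonormal_fam W" by (rule onf_lim[OF Wl sw])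
  have oU: "orthonormal_fam U" by (rule onf_lim[OF Ul su])
  define D where "D j i = sd (r j) i" for j i
  interpret rd: ratio_data D S
  proof
    show "D j i > 0" for j i by (simp add: D_def sd)
    fix a b
    have "(\<lambda>j. sr (r j) $ (a, b)) \<longlonglongrightarrow> S $ (a, b)" by (rule tendsto_vec_nth[OF Sl])
    then show "(\<lambda>j. D j a / (D j a + D j b)) \<longlonglongrightarrow> S $ (a, b)" by (simp add: sr_def D_def)
  qed
  define f where "f = rd.frk"
  define L where "L = sorted_list_of_set (range f)"
  define mc where "mc c = (SOME m. f m = c)" for c
  define lamc where "lamc c i = complex_of_real ((1 - S $ (mc c, i)) / S $ (mc c, i))" for c i
  define PP where "PP c = Pc W U f (lamc c) c" for c
  define Ps where "Ps = map PP L"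
  define \<beta> where "\<beta> \<sigma> j = complex_of_real (1 / D j (mc (L ! \<sigma>)))" for \<sigma> j
  have finR: "finite (range f)" by simp
  have setL: "set L = range f" using finR by (simp add: L_def)
  have sL: "sorted_wrt (<) L" by (simp add: L_def)
  have Lne: "L \<noteq> []" using setL by auto
  have Lmem: "L ! \<sigma> \<in> range f" if "\<sigma> < length L" for \<sigma> using setL that nth_mem by blast
  have fidx: "\<exists>t<length L. L ! t = f i" for i
    using setL by (metis in_set_conv_nth rangeI)
  have mcf: "f (mc c) = c" if "c \<in> range f" for c
    using that unfolding mc_def by (metis (mono_tags, lifting) imageE someI_ex)
  have lamnz: "\<forall>i. f i = c \<longrightarrow> lamc c i \<noteq> 0" if cR: "c \<in> range f" for c
  proof (intro allI impI)
    fix i assume "f i = c"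
    then have "f i = f (mc c)" using mcf[OF cR] by simp
    then have "0 < S $ (mc c, i) \<and> S $ (mc c, i) < 1" using rd.C2 unfolding f_def by blast
    then show "lamc c i \<noteq> 0" by (simp add: lamc_def)
  qed
  have hinge: "is_hinge Ps"
  proof -
    have A: "Ps \<noteq> []" using Lne by (simp add: Ps_def)
    have B: "\<forall>P\<in>set Ps. csub2 P \<and> cdim2 P = CARD('n)"
      by (auto simp: Ps_def PP_def csub2_Pc cdim2_Pc[OF oW oU])
    have C: "\<forall>\<sigma>. \<sigma> + 1 < length Ps \<longrightarrow> Ker (Ps ! \<sigma>) = Dom (Ps ! (\<sigma> + 1)) \<and> Im (Ps ! \<sigma>) = Indef (Ps ! (\<sigma> + 1))"
    proof (intro allI impI)
      fix \<sigma> assume sl: "\<sigma> + 1 < length Ps"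
      then have sl': "\<sigma> + 1 < length L" "\<sigma> < length L" by (simp_all add: Ps_def)
      have e1: "{i. L ! \<sigma> < f i} = {i. L ! (\<sigma> + 1) \<le> f i}"
      proof -
        have "L ! \<sigma> < f i \<longleftrightarrow> L ! (\<sigma> + 1) \<le> f i" for i
        proof -
          obtain t where t: "t < length L" "L ! t = f i" using fidx by blast
          have "L ! \<sigma> < f i \<longleftrightarrow> \<sigma> < t" using sorted_idx_less[OF sL sl'(2) t(1)] t(2) by simp
          moreover have "L ! (\<sigma> + 1) \<le> f i \<longleftrightarrow> \<sigma> + 1 \<le> t" using sorted_idx[OF sL sl'(1) t(1)] t(2) by simp
          ultimately show ?thesis by linarith
        qed
        then show ?thesis by blast
      qed
      have e2: "{i. f i \<le> L ! \<sigma>} = {i. f i < L ! (\<sigma> + 1)}"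
      proof -
        have "f i \<le> L ! \<sigma> \<longleftrightarrow> f i < L ! (\<sigma> + 1)" for i
        proof -
          obtain t where t: "t < length L" "L ! t = f i" using fidx by blast
          have "f i \<le> L ! \<sigma> \<longleftrightarrow> t \<le> \<sigma>" using sorted_idx[OF sL t(1) sl'(2)] t(2) by simp
          moreover have "f i < L ! (\<sigma> + 1) \<longleftrightarrow> t < \<sigma> + 1" using sorted_idx_less[OF sL t(1) sl'(1)] t(2) by simp
          ultimately show ?thesis by linarith
        qed
        then show ?thesis by blast
      qed
      have lnz: "\<forall>i. f i = L ! \<sigma> \<longrightarrow> lamc (L ! \<sigma>) i \<noteq> 0" by (rule lamnz[OF Lmem[OF sl'(2)]])
      have "Ker (Ps ! \<sigma>) = comb W {i. L ! \<sigma> < f i}"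
        using Ker_Pc[OF oU lnz] sl' by (simp add: Ps_def PP_def)
      moreover have "Dom (Ps ! (\<sigma> + 1)) = comb W {i. L ! (\<sigma> + 1) \<le> f i}"
        using sl' by (simp add: Ps_def PP_def Dom_Pc)
      moreover have "Im (Ps ! \<sigma>) = comb U {i. f i \<le> L ! \<sigma>}"
        using Im_Pc[OF lnz] sl' by (simp add: Ps_def PP_def)
      moreover have "Indef (Ps ! (\<sigma> + 1)) = comb U {i. f i < L ! (\<sigma> + 1)}"
        using Indef_Pc[OF oW] sl' by (simp add: Ps_def PP_def)
      ultimately show "Ker (Ps ! \<sigma>) = Dom (Ps ! (\<sigma> + 1)) \<and> Im (Ps ! \<sigma>) = Indef (Ps ! (\<sigma> + 1))"
        using e1 e2 by simp
    qed
    have l0: "0 < length L" using Lne by simp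
    have D': "Dom (hd Ps) = UNIV"
    proof -
      have "hd Ps = PP (L ! 0)" using Lne by (simp add: Ps_def hd_map hd_conv_nth)
      moreover have "{i. L ! 0 \<le> f i} = UNIV"
      proof -
        have "L ! 0 \<le> f i" for i
        proof -
          obtain t where t: "t < length L" "L ! t = f i" using fidx by blast
          show ?thesis using sorted_idx[OF sL l0 t(1)] t(2) by simp
        qed
        then show ?thesis by blast
      qed
      ultimately show ?thesis by (simp add: PP_def Dom_Pc comb_UNIV[OF oW])
    qed
    have E: "Im (last Ps) = UNIV"
    proof -
      have ll: "length L - 1 < length L" using l0 by simp
      have "last Ps = PP (L ! (length L - 1))" using Lne by (simp add: Ps_def last_map last_conv_nth)
      moreover have "{i. f i \<le> L ! (length L - 1)} = UNIV"
      proof -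
        have "f i \<le> L ! (length L - 1)" for i
        proof -
          obtain t where t: "t < length L" "L ! t = f i" using fidx by blast
          show ?thesis using sorted_idx[OF sL t(1) ll] t by simp
        qed
        then show ?thesis by blast
      qed
      moreover have "Im (PP (L ! (length L - 1))) = comb U {i. f i \<le> L ! (length L - 1)}"
        unfolding PP_def by (rule Im_Pc[OF lamnz[OF Lmem[OF ll]]])
      ultimately show ?thesis by (simp add: comb_UNIV[OF oU])
    qed
    have F: "\<forall>P\<in>set Ps. rk P > 0"
    proof
      fix P assume "P \<in> set Ps"
      then obtain c where c: "c \<in> range f" "P = PP c" using setL by (auto simp: Ps_def)
      have "rk P = card {i. c \<le> f i} - card {i. c < f i}"
        using c by (simp add: rk_def PP_def Dom_Pc Ker_Pc[OF oU lamnz[OF c(1)]] cdimV_comb[OF oW])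
      moreover have "card {i. c < f i} < card {i. c \<le> f i}"
      proof (rule psubset_card_mono)
        show "finite {i. c \<le> f i}" by simp
        obtain i0 where "f i0 = c" using c(1) by auto
        then show "{i. c < f i} \<subset> {i. c \<le> f i}" by auto
      qed
      ultimately show "rk P > 0" by simp
    qed
    show ?thesis unfolding is_hinge_def using A B C D' E F by blast
  qed
  have conv: "gr_tendsto (\<lambda>j. graph (mat (\<beta> \<sigma> j) ** g (r j))) (Ps ! \<sigma>)" if sl: "\<sigma> < length Ps" for \<sigma>
  proof -
    have sl': "\<sigma> < length L" using sl by (simp add: Ps_def)
    define c where "c = L ! \<sigma>"
    define m where "m = mc c"
    have cR: "c \<in> range f" using Lmem[OF sl'] by (simp add: c_def)
    have fm: "f m = c" using mcf[OF cR] by (simp add: m_def)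
    have Pss: "Ps ! \<sigma> = Pc W U f (lamc c) c" using sl' by (simp add: Ps_def PP_def c_def)
    have \<beta>s: "\<beta> \<sigma> j = complex_of_real (1 / D j m)" for j by (simp add: \<beta>_def m_def c_def)
    have lim_lt: "(\<lambda>j. D j m / D j i) \<longlonglongrightarrow> 0" if "f i < c" for i
      using rd.C1[of i m] that fm by (simp add: f_def)
    have lim_eq: "(\<lambda>j. D j i / D j m) \<longlonglongrightarrow> (1 - S $ (m, i)) / S $ (m, i)" if "f i = c" for i
    proof -
      have "0 < S $ (m, i)" using rd.C2[of i m] that fm by (simp add: f_def)
      then show ?thesis by (rule rd.R3)
    qed
    have lim_gt: "(\<lambda>j. D j i / D j m) \<longlonglongrightarrow> 0" if "c < f i" for i
      using rd.C3[of m i] that fm by (simp add: f_def)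
    have lamc_eq: "lamc c i = complex_of_real ((1 - S $ (m, i)) / S $ (m, i))" for i
      by (simp add: lamc_def m_def)
    have Dnz: "D j i \<noteq> 0" for j i using rd.Dpos[of j i] by simp
    show ?thesis unfolding gr_tendsto_def Pss
    proof (rule allI, rule gr_lemma)
      show "subspace (Pc W U f (lamc c) c)" using real_Pc[OF oW oU] by blast
      show "subspace (graph (mat (\<beta> \<sigma> j) ** g (r j)))" for j using real_graph by blast
      show "dim (graph (mat (\<beta> \<sigma> j) ** g (r j))) = dim (Pc W U f (lamc c) c)" for j
        using real_graph[of "mat (\<beta> \<sigma> j) ** g (r j)"] real_Pc[OF oW oU, of f "lamc c" c] by simp
      fix p assume "p \<in> Pc W U f (lamc c) c"
      then obtain a where p: "p = psi W U f (lamc c) c a" by (auto simp: Pc_def)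
      define xj where "xj j i = (if c \<le> f i then a $ i else a $ i * complex_of_real (D j m / D j i))" for j i
      define cf where "cf j i = (if c \<le> f i then complex_of_real (D j i / D j m) * a $ i else a $ i)" for j i
      define v where "v j = (\<Sum>i\<in>UNIV. xj j i *s sw (r j) $ i)" for j
      define q where "q j = (v j, (mat (\<beta> \<sigma> j) ** g (r j)) *v v j)" for j
      have qin: "q j \<in> graph (mat (\<beta> \<sigma> j) ** g (r j))" for j by (auto simp: q_def graph_def)
      have qsnd: "(mat (\<beta> \<sigma> j) ** g (r j)) *v v j = (\<Sum>i\<in>UNIV. cf j i *s su (r j) $ i)" for j
      proof -
        have "(mat (\<beta> \<sigma> j) ** g (r j)) *v v j = \<beta> \<sigma> j *s (\<Sum>i\<in>UNIV. xj j i *s (g (r j) *v sw (r j) $ i))"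
          by (simp only: v_def mat_vec_c) (simp only: matvec_sum)
        also have "\<dots> = (\<Sum>i\<in>UNIV. (\<beta> \<sigma> j * (xj j i * complex_of_real (D j i))) *s su (r j) $ i)"
          by (simp add: sg D_def vec_eq_iff sum_component sum_distrib_left mult.assoc)
        also have "\<dots> = (\<Sum>i\<in>UNIV. cf j i *s su (r j) $ i)"
        proof (rule sum.cong[OF refl])
          fix i
          have "\<beta> \<sigma> j * (xj j i * complex_of_real (D j i)) = cf j i"
            using Dnz[of j i] Dnz[of j m] by (simp add: xj_def cf_def \<beta>s field_simps)
          then show "(\<beta> \<sigma> j * (xj j i * complex_of_real (D j i))) *s su (r j) $ i = cf j i *s su (r j) $ i"
            by simp
        qed
        finally show ?thesis .
      qed
      have limx: "(\<lambda>j. xj j i) \<longlonglongrightarrow> xco f c a i" for i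
      proof (cases "c \<le> f i")
        case True then show ?thesis by (simp add: xj_def xco_def)
      next
        case False
        then have "(\<lambda>j. a $ i * complex_of_real (D j m / D j i)) \<longlonglongrightarrow> a $ i * complex_of_real 0"
          by (intro tendsto_mult tendsto_const tendsto_of_real lim_lt) simp
        then show ?thesis using False by (simp add: xj_def xco_def)
      qed
      have limc: "(\<lambda>j. cf j i) \<longlonglongrightarrow> yco f (lamc c) c a i" for i
      proof (cases "f i = c")
        case True
        then have "(\<lambda>j. complex_of_real (D j i / D j m) * a $ i) \<longlonglongrightarrow> complex_of_real ((1 - S $ (m, i)) / S $ (m, i)) * a $ i"
          by (intro tendsto_mult tendsto_const tendsto_of_real lim_eq)
        then show ?thesis using True by (simp add: cf_def yco_def lamc_eq)
      next
        case False
        show ?thesis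
        proof (cases "c < f i")
          case True
          then have "(\<lambda>j. complex_of_real (D j i / D j m) * a $ i) \<longlonglongrightarrow> complex_of_real 0 * a $ i"
            by (intro tendsto_mult tendsto_const tendsto_of_real lim_gt)
          then show ?thesis using True by (simp add: cf_def yco_def)
        next
          case False
          then show ?thesis using \<open>f i \<noteq> c\<close> by (simp add: cf_def yco_def)
        qed
      qed
      have "q \<longlonglongrightarrow> p"
        unfolding q_def qsnd unfolding p psi_def v_def
        by (intro tendsto_Pair tendsto_lincomb limx limc tendsto_vec_nth Wl Ul)
      then show "\<exists>q. (\<forall>j. q j \<in> graph (mat (\<beta> \<sigma> j) ** g (r j))) \<and> q \<longlonglongrightarrow> p" using qin by blast
    qed
  qed
  have \<beta>nz: "\<beta> \<sigma> j \<noteq> 0" for \<sigma> j using rd.Dpos[of j "mc (L ! \<sigma>)"] by (simp add: \<beta>_def)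
  show ?thesis
    by (rule exI[where x=r], rule exI[where x=Ps], rule exI[where x=\<beta>]) (use r hinge conv \<beta>nz in auto)
qed


end
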